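(* Let $x\in\Delta\setminus\partial\Delta$. The following are equivalent: (i) $x$ is a stable equilibrium; (ii) $x\in\Gamma$ and the graph $G_x$ satisfies property $P_{G_x}$; (iii) $x\in\Gamma_{\mathcal{G}}$ for some subgraph $\mathcal{G}$ of $G$ satisfying $P_{\mathcal{G}}$.
   Context: Let $G=(\mathbb{V},E)$ be a finite graph with adjacency $\sim$ and edge set $E$. Let $a_{ij}=a_{ji}\ge0$ ($a_{ij}>0$ only if $i\sim j$), and $p_{ij}=p_{ji}\in[0,1]$ with $p_{ij}=0$ if $i\not\sim j$; assume some $a_{ij}p_{ij}>0$. Fix $h_1\in(0,1]$ and let $\Delta$ be the set of arrays $x=(x_{ij})_{i,j\in\mathbb{V}}$ with $x_{ij}=x_{ji}\ge0$, $x_{ij}=0$ if $i\not\sim j$, $\sum_{i,j}x_{ij}=1$, $\sum_{(i,j):a_{ij}p_{ij}>0}x_{ij}\ge h_1$; $x_i:=\sum_j x_{ij}$. Let $\partial\Delta$ be the set of $x\in\Delta$ for which some vertex $i$ having a neighbour $j$ with $a_{ij}p_{ij}>0$ satisfies $\sum_{j:a_{ij}p_{ij}>0}x_{ij}=0$. Let $H(x)=\sum_{(i,j):x_{ij}>0}a_{ij}p_{ij}x_{ij}^2/(x_ix_j)$, $F(x)_{ij}=x_{ij}(y_{ij}-H(x))$ where $y_{ij}=a_{ij}p_{ij}x_{ij}/(x_ix_j)$ ($y_{ij}:=0$ if $a_{ij}p_{ij}=0$; $F_{ij}=0$ if $x_{ij}=0$), and $\Gamma=\{x\in\Delta:F(x)=0\}$.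 For $x\in\Gamma\cap(\Delta\setminus\partial\Delta)$, $J(x)$ is the Jacobian matrix (indexed by pairs of edges) of the map $(x_e)_{e\in E}\mapsto(F_e(x))_{e\in E}$, where $x_{ij}=x_{ji}=x_e$ for $e=\{i,j\}$, $x_i=\sum_jx_{ij}$, and the formulas for $H$ (summing only terms with $a_{ij}p_{ij}>0$) and $F$ are regarded as smooth functions of the unconstrained variables near $x$. $x$ is a stable equilibrium iff $x\in\Gamma\cap(\Delta\setminus\partial\Delta)$ and all eigenvalues of $J(x)$ have nonpositive real part. For $x\in\Delta$, $G_x$ is the subgraph with vertex set $\mathbb{V}$ and $i,j$ adjacent iff $x_{ij}>0$. For a subgraph $\mathcal{G}$ of $G$ (vertex set $\mathbb{V}$, edges a subset of $E$) with connected components $\mathcal{C}_1,\dots,\mathcal{C}_d$, property $P_{\mathcal{G}}$ means: (1) for each $m$ and all edges $\{i,j\},\{k,l\}$ of $\mathcal{G}$ within $\mathcal{C}_m$, $a_{ij}p_{ij}=a_{kl}p_{kl}>0$; (2) each $\mathcal{C}_m$ contains at most one vertex with several neighbours in $\mathcal{G}$; (3) a vertex $i$ belongs to an edge of $\mathcal{G}$ iff $a_{ij}p_{ij}>0$ for some $j\sim i$. If $P_{\mathcal{G}}$ holds, the nucleus of a component is its unique vertex with several neighbours, chosen arbitrarily if the component has exactly two vertices, or its single vertex if isolated; $N$ is the set of nuclei; for $i\in N$, $(ap)_i:=a_{ik}p_{ik}$ for any $\mathcal{G}$-neighbour $k$ of $i$ ($:=0$ if $i$ is isolated). $\Gamma_{\mathcal{G}}$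 is the set of $q\in\Delta$ with: $G_q=\mathcal{G}$; $q_i=(ap)_i/(2\sum_{j\in N}(ap)_j)$ for all $i\in N$; and for each $i\in N$, $(q_{ij})_{j}$ over $\mathcal{G}$-neighbours $j$ of $i$ are positive numbers with sum $q_i$. *)

theory Defs
  imports "HOL-Analysis.Analysis"
begin

text \<open>Vertices form a finite type 'v; the graph G is a symmetric irreflexive
adjacency relation adj.
Subgraphs of G (with vertex set V) are symmetric relations S contained in adj.\<close>

definition vsum :: "('v::finite \<Rightarrow> 'v \<Rightarrow> real) \<Rightarrow> 'v \<Rightarrow> real" where
  "vsum x i = (\<Sum>j\<in>UNIV. x i j)"

definition Delta :: "('v::finite \<Rightarrow> 'v \<Rightarrow> bool) \<Rightarrow> ('v \<Rightarrow> 'v \<Rightarrow> real) \<Rightarrow>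
    ('v \<Rightarrow> 'v \<Rightarrow> real) \<Rightarrow> real \<Rightarrow> ('v \<Rightarrow> 'v \<Rightarrow> real) set" where
  "Delta adj a p h1 = {x. (\<forall>i j. x i j = x j i \<and> x i j \<ge> 0)
      \<and> (\<forall>i j. \<not> adj i j \<longrightarrow> x i j = 0)
      \<and> (\<Sum>(i,j)\<in>UNIV. x i j) = 1
      \<and> (\<Sum>(i,j)\<in>{(i,j). a i j * p i j > 0}. x i j) \<ge> h1}"

definition bdry :: "('v::finite \<Rightarrow> 'v \<Rightarrow> bool) \<Rightarrow> ('v \<Rightarrow> 'v \<Rightarrow> real) \<Rightarrow>
    ('v \<Rightarrow> 'v \<Rightarrow> real) \<Rightarrow> real \<Rightarrow> ('v \<Rightarrow> 'v \<Rightarrow> real) set" where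
  "bdry adj a p h1 = {x \<in> Delta adj a p h1. \<exists>i. (\<exists>j. adj i j \<and> a i j * p i j > 0)
      \<and> (\<Sum>j\<in>{j. a i j * p i j > 0}. x i j) = 0}"

definition Hfun :: "('v::finite \<Rightarrow> 'v \<Rightarrow> real) \<Rightarrow> ('v \<Rightarrow> 'v \<Rightarrow> real) \<Rightarrow>
    ('v \<Rightarrow> 'v \<Rightarrow> real) \<Rightarrow> real" where
  "Hfun a p x = (\<Sum>(i,j)\<in>{(i,j). x i j > 0}.
      a i j * p i j * (x i j)\<^sup>2 / (vsum x i * vsum x j))"

definition yfun :: "('v::finite \<Rightarrow> 'v \<Rightarrow> real) \<Rightarrow> ('v \<Rightarrow> 'v \<Rightarrow> real) \<Rightarrow>
    ('v \<Rightarrow> 'v \<Rightarrow> real) \<Rightarrow> 'v \<Rightarrow> 'v \<Rightarrow> real" where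
  "yfun a p x i j = (if a i j * p i j = 0 then 0
      else a i j * p i j * x i j / (vsum x i * vsum x j))"

definition Ffun :: "('v::finite \<Rightarrow> 'v \<Rightarrow> real) \<Rightarrow> ('v \<Rightarrow> 'v \<Rightarrow> real) \<Rightarrow>
    ('v \<Rightarrow> 'v \<Rightarrow> real) \<Rightarrow> 'v \<Rightarrow> 'v \<Rightarrow> real" where
  "Ffun a p x i j = (if x i j = 0 then 0 else x i j * (yfun a p x i j - Hfun a p x))"

definition Gamma :: "('v::finite \<Rightarrow> 'v \<Rightarrow> bool) \<Rightarrow> ('v \<Rightarrow> 'v \<Rightarrow> real) \<Rightarrow>
    ('v \<Rightarrow> 'v \<Rightarrow> real) \<Rightarrow> real \<Rightarrow> ('v \<Rightarrow> 'v \<Rightarrow> real) set" where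
  "Gamma adj a p h1 = {x \<in> Delta adj a p h1. \<forall>i j. Ffun a p x i j = 0}"

definition edges :: "('v \<Rightarrow> 'v \<Rightarrow> bool) \<Rightarrow> 'v set set" where
  "edges adj = {{i, j} | i j. adj i j}"

definition edge_ends :: "('v \<Rightarrow> 'v \<Rightarrow> bool) \<Rightarrow> 'v set \<Rightarrow> 'v \<times> 'v" where
  "edge_ends adj e = (SOME (i, j). adj i j \<and> e = {i, j})"

definition arr_of :: "('v \<Rightarrow> 'v \<Rightarrow> bool) \<Rightarrow> ('v set \<Rightarrow> real) \<Rightarrow> 'v \<Rightarrow> 'v \<Rightarrow> real" where
  "arr_of adj xi i j = (if adj i j then xi {i, j} else 0)"

definition evec :: "('v \<Rightarrow> 'v \<Rightarrow> bool) \<Rightarrow> ('v \<Rightarrow> 'v \<Rightarrow> real) \<Rightarrow> 'v set \<Rightarrow> real" where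
  "evec adj x e = (case edge_ends adj e of (i, j) \<Rightarrow> x i j)"

text \<open>Smooth versions: H summing only terms with a_ij p_ij > 0.\<close>
definition Hsm :: "('v::finite \<Rightarrow> 'v \<Rightarrow> real) \<Rightarrow> ('v \<Rightarrow> 'v \<Rightarrow> real) \<Rightarrow>
    ('v \<Rightarrow> 'v \<Rightarrow> real) \<Rightarrow> real" where
  "Hsm a p x = (\<Sum>(i,j)\<in>{(i,j). a i j * p i j > 0}.
      a i j * p i j * (x i j)\<^sup>2 / (vsum x i * vsum x j))"

definition Fsm :: "('v::finite \<Rightarrow> 'v \<Rightarrow> bool) \<Rightarrow> ('v \<Rightarrow> 'v \<Rightarrow> real) \<Rightarrow>
    ('v \<Rightarrow> 'v \<Rightarrow> real) \<Rightarrow> ('v set \<Rightarrow> real) \<Rightarrow> 'v set \<Rightarrow> real" where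
  "Fsm adj a p xi e = (case edge_ends adj e of (i, j) \<Rightarrow>
      arr_of adj xi i j * (yfun a p (arr_of adj xi) i j - Hsm a p (arr_of adj xi)))"

definition jac :: "('v::finite \<Rightarrow> 'v \<Rightarrow> bool) \<Rightarrow> ('v \<Rightarrow> 'v \<Rightarrow> real) \<Rightarrow>
    ('v \<Rightarrow> 'v \<Rightarrow> real) \<Rightarrow> ('v \<Rightarrow> 'v \<Rightarrow> real) \<Rightarrow> 'v set \<Rightarrow> 'v set \<Rightarrow> real" where
  "jac adj a p x e f = deriv (\<lambda>t. Fsm adj a p ((evec adj x)(f := t)) e) (evec adj x f)"

definition jac_eigenvalue :: "('v::finite \<Rightarrow> 'v \<Rightarrow> bool) \<Rightarrow> ('v \<Rightarrow> 'v \<Rightarrow> real) \<Rightarrow>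
    ('v \<Rightarrow> 'v \<Rightarrow> real) \<Rightarrow> ('v \<Rightarrow> 'v \<Rightarrow> real) \<Rightarrow> complex \<Rightarrow> bool" where
  "jac_eigenvalue adj a p x mu = (\<exists>v :: 'v set \<Rightarrow> complex.
      (\<exists>e\<in>edges adj. v e \<noteq> 0) \<and>
      (\<forall>e\<in>edges adj. (\<Sum>f\<in>edges adj. complex_of_real (jac adj a p x e f) * v f) = mu * v e))"

definition stable_eq :: "('v::finite \<Rightarrow> 'v \<Rightarrow> bool) \<Rightarrow> ('v \<Rightarrow> 'v \<Rightarrow> real) \<Rightarrow>
    ('v \<Rightarrow> 'v \<Rightarrow> real) \<Rightarrow> real \<Rightarrow> ('v \<Rightarrow> 'v \<Rightarrow> real) \<Rightarrow> bool" where
  "stable_eq adj a p h1 x = (x \<in> Gamma adj a p h1 \<and> x \<notin> bdry adj a p h1 \<and>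
      (\<forall>mu. jac_eigenvalue adj a p x mu \<longrightarrow> Re mu \<le> 0))"

definition subgraph :: "('v \<Rightarrow> 'v \<Rightarrow> bool) \<Rightarrow> ('v \<Rightarrow> 'v \<Rightarrow> bool) \<Rightarrow> bool" where
  "subgraph adj S = ((\<forall>i j. S i j \<longrightarrow> S j i) \<and> (\<forall>i j. S i j \<longrightarrow> adj i j))"

definition graph_of :: "('v \<Rightarrow> 'v \<Rightarrow> real) \<Rightarrow> 'v \<Rightarrow> 'v \<Rightarrow> bool" where
  "graph_of x i j = (x i j > 0)"

definition ndeg :: "('v::finite \<Rightarrow> 'v \<Rightarrow> bool) \<Rightarrow> 'v \<Rightarrow> nat" where
  "ndeg S i = card {j. S i j}"

text \<open>Same connected component of S: S^** (S symmetric).\<close>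
definition propP :: "('v::finite \<Rightarrow> 'v \<Rightarrow> bool) \<Rightarrow> ('v \<Rightarrow> 'v \<Rightarrow> real) \<Rightarrow>
    ('v \<Rightarrow> 'v \<Rightarrow> real) \<Rightarrow> ('v \<Rightarrow> 'v \<Rightarrow> bool) \<Rightarrow> bool" where
  "propP adj a p S =
     ((\<forall>i j k l. S i j \<longrightarrow> S k l \<longrightarrow> S\<^sup>*\<^sup>* i k \<longrightarrow>
          a i j * p i j = a k l * p k l \<and> a i j * p i j > 0)
    \<and> (\<forall>i k. S\<^sup>*\<^sup>* i k \<longrightarrow> ndeg S i \<ge> 2 \<longrightarrow> ndeg S k \<ge> 2 \<longrightarrow> i = k)
    \<and> (\<forall>i. (\<exists>j. S i j) \<longleftrightarrow> (\<exists>j. adj i j \<and> a i j * p i j > 0)))"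

text \<open>N is a valid choice of nuclei: exactly one per component; it is the vertex
with several neighbours if the component has one (otherwise the component is an
isolated vertex or a single edge and any of its vertices may be chosen).\<close>
definition is_nuclei :: "('v::finite \<Rightarrow> 'v \<Rightarrow> bool) \<Rightarrow> 'v set \<Rightarrow> bool" where
  "is_nuclei S N = ((\<forall>i. \<exists>!n. n \<in> N \<and> S\<^sup>*\<^sup>* i n)
     \<and> (\<forall>n\<in>N. ndeg S n \<ge> 2 \<or> (\<forall>k. S\<^sup>*\<^sup>* n k \<longrightarrow> ndeg S k \<le> 1)))"

definition ap_nuc :: "('v \<Rightarrow> 'v \<Rightarrow> real) \<Rightarrow> ('v \<Rightarrow> 'v \<Rightarrow> real) \<Rightarrow>
    ('v \<Rightarrow> 'v \<Rightarrow> bool) \<Rightarrow> 'v \<Rightarrow> real" where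
  "ap_nuc a p S i = (if \<exists>k. S i k then a i (SOME k. S i k) * p i (SOME k. S i k) else 0)"

definition GammaG :: "('v::finite \<Rightarrow> 'v \<Rightarrow> bool) \<Rightarrow> ('v \<Rightarrow> 'v \<Rightarrow> real) \<Rightarrow>
    ('v \<Rightarrow> 'v \<Rightarrow> real) \<Rightarrow> real \<Rightarrow> ('v \<Rightarrow> 'v \<Rightarrow> bool) \<Rightarrow> 'v set \<Rightarrow>
    ('v \<Rightarrow> 'v \<Rightarrow> real) set" where
  "GammaG adj a p h1 S N = {q \<in> Delta adj a p h1.
      graph_of q = S
    \<and> (\<forall>i\<in>N. vsum q i = ap_nuc a p S i / (2 * (\<Sum>j\<in>N. ap_nuc a p S j)))
    \<and> (\<forall>i\<in>N. (\<forall>j. S i j \<longrightarrow> q i j > 0) \<and> (\<Sum>j\<in>{j. S i j}. q i j) = vsum q i)}"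

end

theory Submission
  imports Defs
begin


lemma quad_nonneg_lin_zero:
  fixes W K :: real
  assumes "\<And>t. 0 \<le> 2*t*W + t^2*K" and "W \<ge> 0"
  shows "W = 0"
proof (rule ccontr)
  assume "W \<noteq> 0" hence W: "W > 0" using assms(2) by simp
  define k where "k = \<bar>K\<bar> + 1"
  have k: "k > 0" "K \<le> k" unfolding k_def by auto
  have "0 \<le> 2*(-W/k)*W + (-W/k)^2*K" by (rule assms(1))
  also have "\<dots> = W^2 * (K - 2*k) / k^2" using k by (simp add: field_simps power2_eq_square)
  also have "\<dots> < 0" using W k by (intro divide_neg_pos mult_pos_neg) (auto simp: k_def)
  finally show False by simp
qed

lemma norm_sq_vec: "(norm (u::real^'n))^2 = (\<Sum>i\<in>UNIV. (u$i)^2)"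
  unfolding norm_vec_def L2_set_def
  by (subst real_sqrt_pow2) (auto intro: sum_nonneg)

lemma rayleigh:
  fixes Q :: "'n::finite \<Rightarrow> 'n \<Rightarrow> real" and z :: "'n \<Rightarrow> real"
  assumes Qsym: "\<And>i j. Q i j = Q j i"
    and lt: "(\<Sum>i\<in>UNIV. \<Sum>j\<in>UNIV. Q i j * z i * z j) < c * (\<Sum>i\<in>UNIV. (z i)^2)"
  shows "\<exists>w. (\<exists>i. w i \<noteq> 0) \<and> (\<exists>lam < c. \<forall>i. (\<Sum>j\<in>UNIV. Q i j * w j) = lam * w i)"
proof -
  define f where "f = (\<lambda>u::real^'n. \<Sum>i\<in>UNIV. \<Sum>j\<in>UNIV. Q i j * u$i * u$j)"
  have cont: "continuous_on (sphere 0 1) f"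
    unfolding f_def by (intro continuous_intros)
  have ne: "sphere (0::real^'n) 1 \<noteq> {}" by (simp add: sphere_def) (metis norm_sgn sgn_zero_iff vector_one_nth zero_neq_one norm_zero axis_nth)
  obtain z0 where z0: "z0 \<in> sphere 0 1" and zmin: "\<And>y. y \<in> sphere 0 1 \<Longrightarrow> f z0 \<le> f y"
    using continuous_attains_inf[OF compact_sphere ne cont] by blast
  define lam where "lam = f z0"
  have z0n: "(\<Sum>i\<in>UNIV. (z0$i)^2) = 1" using z0 norm_sq_vec[of z0] by simp
  have fscale: "f (r *\<^sub>R u) = r^2 * f u" for r u
    unfolding f_def by (simp add: sum_distrib_left algebra_simps power2_eq_square)
  have bound: "f u \<ge> lam * (\<Sum>i\<in>UNIV. (u$i)^2)" for u
  proof (cases "u = 0")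
    case True thus ?thesis by (simp add: f_def)
  next
    case False
    define s where "s = norm u"
    have s: "s > 0" using False by (simp add: s_def)
    have "(1/s) *\<^sub>R u \<in> sphere 0 1" using s by (simp add: s_def)
    hence "lam \<le> f ((1/s) *\<^sub>R u)" using zmin lam_def by blast
    also have "\<dots> = f u / s^2" using fscale[of "1/s" u] by (simp add: power_divide)
    finally have "lam * s^2 \<le> f u" using s by (simp add: field_simps)
    thus ?thesis using norm_sq_vec[of u] by (simp add: s_def)
  qed
  have lamc: "lam < c"
  proof -
    define zz where "zz = (\<chi> i. z i)"
    have "f zz < c * (\<Sum>i\<in>UNIV. (z i)^2)" using lt by (simp add: f_def zz_def)
    moreover have "f zz \<ge> lam * (\<Sum>i\<in>UNIV. (z i)^2)" using bound[of zz] by (simp add: zz_def)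
    moreover have "(\<Sum>i\<in>UNIV. (z i)^2) > 0"
    proof (rule ccontr)
      assume "\<not> ?thesis"
      hence "(\<Sum>i\<in>UNIV. (z i)^2) = 0" by (metis less_eq_real_def not_le sum_nonneg zero_le_power2)
      hence "\<forall>i. z i = 0" by (simp add: sum_nonneg_eq_0_iff)
      thus False using lt by simp
    qed
    ultimately show ?thesis by (smt (verit, best) mult_right_mono)
  qed
  define w where "w j = (\<Sum>i\<in>UNIV. Q j i * z0$i) - lam * z0$j" for j
  define B where "B = (\<Sum>i\<in>UNIV. \<Sum>j\<in>UNIV. Q i j * z0$i * w j)"
  define K where "K = (\<Sum>i\<in>UNIV. \<Sum>j\<in>UNIV. Q i j * w i * w j) - lam * (\<Sum>i\<in>UNIV. (w i)^2)"
  have Bw: "B = (\<Sum>j\<in>UNIV. (w j)^2) + lam * (\<Sum>j\<in>UNIV. z0$j * w j)"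
  proof -
    have "B = (\<Sum>j\<in>UNIV. \<Sum>i\<in>UNIV. Q j i * z0$i * w j)"
      unfolding B_def by (subst sum.swap) (intro sum.cong refl, simp add: Qsym)
    also have "\<dots> = (\<Sum>j\<in>UNIV. (\<Sum>i\<in>UNIV. Q j i * z0$i) * w j)"
      by (simp add: sum_distrib_right)
    also have "\<dots> = (\<Sum>j\<in>UNIV. (w j + lam * z0$j) * w j)" by (simp add: w_def)
    also have "\<dots> = (\<Sum>j\<in>UNIV. (w j)^2) + lam * (\<Sum>j\<in>UNIV. z0$j * w j)"
      by (simp add: algebra_simps power2_eq_square sum.distrib sum_distrib_left)
    finally show ?thesis .
  qed
  have expand: "0 \<le> 2*t*(\<Sum>j\<in>UNIV. (w j)^2) + t^2*K" for t
  proof -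
    define u where "u = z0 + t *\<^sub>R (\<chi> j. w j)"
    have "f u = f z0 + 2*t*B + t^2 * (\<Sum>i\<in>UNIV. \<Sum>j\<in>UNIV. Q i j * w i * w j)"
    proof -
      have "f u = (\<Sum>i\<in>UNIV. \<Sum>j\<in>UNIV. Q i j * z0$i * z0$j + t * (Q i j * z0$i * w j) + t * (Q i j * w i * z0$j) + t^2 * (Q i j * w i * w j))"
        unfolding f_def u_def by (intro sum.cong refl) (simp add: algebra_simps power2_eq_square)
      also have "\<dots> = f z0 + t*B + t * (\<Sum>i\<in>UNIV. \<Sum>j\<in>UNIV. Q i j * w i * z0$j) + t^2 * (\<Sum>i\<in>UNIV. \<Sum>j\<in>UNIV. Q i j * w i * w j)"
        unfolding f_def B_def by (simp add: sum.distrib sum_distrib_left)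
      also have "(\<Sum>i\<in>UNIV. \<Sum>j\<in>UNIV. Q i j * w i * z0$j) = B"
        unfolding B_def by (subst sum.swap) (intro sum.cong refl, simp add: Qsym)
      finally show ?thesis by simp
    qed
    moreover have "(\<Sum>i\<in>UNIV. (u$i)^2) = 1 + 2*t*(\<Sum>j\<in>UNIV. z0$j * w j) + t^2 * (\<Sum>i\<in>UNIV. (w i)^2)"
    proof -
      have "(\<Sum>i\<in>UNIV. (u$i)^2) = (\<Sum>i\<in>UNIV. (z0$i)^2 + 2*t*(z0$i * w i) + t^2 * (w i)^2)"
        unfolding u_def by (intro sum.cong refl) (simp add: algebra_simps power2_eq_square)
      also have "\<dots> = 1 + 2*t*(\<Sum>j\<in>UNIV. z0$j * w j) + t^2 * (\<Sum>i\<in>UNIV. (w i)^2)"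
        using z0n by (simp add: sum.distrib sum_distrib_left)
      finally show ?thesis .
    qed
    ultimately have "0 \<le> f z0 + 2*t*B + t^2 * (\<Sum>i\<in>UNIV. \<Sum>j\<in>UNIV. Q i j * w i * w j)
        - lam * (1 + 2*t*(\<Sum>j\<in>UNIV. z0$j * w j) + t^2 * (\<Sum>i\<in>UNIV. (w i)^2))"
      using bound[of u] by simp
    thus ?thesis unfolding Bw K_def lam_def by (simp add: algebra_simps)
  qed
  have "(\<Sum>j\<in>UNIV. (w j)^2) = 0"
    by (rule quad_nonneg_lin_zero[OF expand]) (simp add: sum_nonneg)
  hence w0: "\<forall>j. w j = 0" by (simp add: sum_nonneg_eq_0_iff)
  have A: "\<exists>i. z0$i \<noteq> 0"
  proof (rule ccontr)
    assume "\<not> (\<exists>i. z0$i \<noteq> 0)"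
    hence "\<forall>i. z0$i = 0" by simp
    thus False using z0n by simp
  qed
  have C: "\<forall>i. (\<Sum>j\<in>UNIV. Q i j * z0$j) = lam * z0$i" using w0 by (simp add: w_def)
  show ?thesis
    apply (rule exI[where x="\<lambda>i. z0$i"])
    using A lamc C by auto
qed


locale PS =
  fixes adj :: "'v::finite \<Rightarrow> 'v \<Rightarrow> bool"
    and a p x :: "'v \<Rightarrow> 'v \<Rightarrow> real" and h1 :: real
  assumes adj_sym: "\<And>i j. adj i j \<Longrightarrow> adj j i"
    and adj_irrefl: "\<And>i. \<not> adj i i"
    and a_sym: "\<And>i j. a i j = a j i" and a_nonneg: "\<And>i j. a i j \<ge> 0"
    and a_adj: "\<And>i j. a i j > 0 \<Longrightarrow> adj i j"
    and p_adj: "\<And>i j. \<not> adj i j \<Longrightarrow> p i j = 0"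
    and p_sym: "\<And>i j. p i j = p j i" and p_range: "\<And>i j. 0 \<le> p i j \<and> p i j \<le> 1"
    and h1pos: "0 < h1"
    and xD: "x \<in> Delta adj a p h1" and xnb: "x \<notin> bdry adj a p h1"
begin

abbreviation "ap i j \<equiv> a i j * p i j"
abbreviation "xv \<equiv> vsum x"
abbreviation "H \<equiv> Hfun a p x"

lemma ap_sym: "ap i j = ap j i" using a_sym p_sym by simp
lemma ap_nn: "ap i j \<ge> 0" using a_nonneg p_range by simp

lemma x_sym: "x i j = x j i" using xD unfolding Delta_def by auto
lemma x_nn: "x i j \<ge> 0" using xD unfolding Delta_def by auto
lemma x_adj: "\<not> adj i j \<Longrightarrow> x i j = 0" using xD unfolding Delta_def by auto
lemma x_irr: "x i i = 0" using x_adj adj_irrefl by blast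
lemma x_pos_adj: "x i j > 0 \<Longrightarrow> adj i j" using x_adj by force
lemma x_total: "(\<Sum>(i,j)\<in>UNIV. x i j) = 1" using xD unfolding Delta_def by auto
lemma ap_adj: "ap i j > 0 \<Longrightarrow> adj i j" using p_adj by fastforce
lemma x_h1: "(\<Sum>(i,j)\<in>{(i,j). ap i j > 0}. x i j) \<ge> h1" using xD unfolding Delta_def by auto

lemma xv_def': "xv i = (\<Sum>j\<in>UNIV. x i j)" by (simp add: vsum_def)

lemma x_le_xv: "x i j \<le> xv i"
  unfolding xv_def' by (rule member_le_sum) (auto simp: x_nn)

lemma xv_nn: "xv i \<ge> 0" unfolding xv_def' by (simp add: sum_nonneg x_nn)

lemma xv_pos: "x i j > 0 \<Longrightarrow> xv i > 0" using x_le_xv[of i j] by simp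

lemma xv_pos_ap: assumes "adj i j" "ap i j > 0" shows "xv i > 0"
proof -
  have ne: "(\<Sum>j\<in>{j. ap i j > 0}. x i j) \<noteq> 0" using xnb xD assms unfolding bdry_def by blast
  have "(\<Sum>j\<in>{j. ap i j > 0}. x i j) \<le> xv i"
    unfolding xv_def' by (rule sum_mono2) (auto simp: x_nn)
  moreover have "(\<Sum>j\<in>{j. ap i j > 0}. x i j) \<ge> 0" by (simp add: sum_nonneg x_nn)
  ultimately show ?thesis using ne by linarith
qed

lemma xv_pos_ap': assumes "ap i j > 0" shows "xv i > 0"
proof -
  have "adj i j" using assms p_adj by fastforce
  thus ?thesis using xv_pos_ap assms by blast
qed

end


lemma pair_sum: "(\<Sum>(i,j)\<in>{(i,j). P i j}. g i j) = (\<Sum>i\<in>(UNIV::'v::finite set). \<Sum>j\<in>(UNIV::'v set). if P i j then g i j else 0)"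
proof -
  have e: "{(i,j). P i j} = {z\<in>UNIV. case_prod P z}" by auto
  have "(\<Sum>(i,j)\<in>{(i,j). P i j}. g i j) = (\<Sum>z\<in>UNIV. if case_prod P z then case_prod g z else 0)"
    unfolding e by (subst sum.inter_filter) (simp_all add: prod.case_eq_if)
  also have "\<dots> = (\<Sum>(i,j)\<in>UNIV \<times> UNIV. if P i j then g i j else 0)"
    unfolding UNIV_Times_UNIV by (intro sum.cong refl) (auto split: prod.splits)
  also have "\<dots> = (\<Sum>i\<in>UNIV. \<Sum>j\<in>UNIV. if P i j then g i j else 0)"
    by (rule sum.cartesian_product[symmetric])
  finally show ?thesis .
qed

lemma pair_sum_UNIV: "(\<Sum>(i,j)\<in>(UNIV::('v::finite\<times>'v) set). g i j) = (\<Sum>i\<in>UNIV. \<Sum>j\<in>UNIV. g i j)"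
  using pair_sum[where P="\<lambda>i j. True" and g=g] by simp

context PS begin

lemma xv_total: "(\<Sum>i\<in>UNIV. xv i) = 1"
  using x_total by (simp add: pair_sum_UNIV xv_def')

definition "hterm i j = ap i j * (x i j)^2 / (xv i * xv j)"

lemma hterm_nn: "hterm i j \<ge> 0"
  unfolding hterm_def by (intro divide_nonneg_nonneg mult_nonneg_nonneg ap_nn) (auto simp: xv_nn)

lemma ap_if: "(if 0 < ap i j then ap i j * c / d else 0) = ap i j * c / d"
proof (cases "0 < ap i j")
  case False
  hence "ap i j = 0" using ap_nn[of i j] by linarith
  thus ?thesis by (simp only: mult_zero_left div_0 if_cancel)
qed simp

lemma x_if: "(if 0 < x i j then ap i j * (x i j)^2 / d else 0) = ap i j * (x i j)^2 / d"
proof (cases "0 < x i j")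
  case False
  hence "x i j = 0" using x_nn[of i j] by linarith
  thus ?thesis by simp
qed simp

lemma H_eq: "H = (\<Sum>i\<in>UNIV. \<Sum>j\<in>UNIV. hterm i j)"
  unfolding Hfun_def pair_sum hterm_def
  by (intro sum.cong refl) (simp only: x_if)

lemma Hsm_eq: "Hsm a p x = H"
  unfolding H_eq Hsm_def pair_sum hterm_def
  by (intro sum.cong refl) (simp only: ap_if)

lemma H_pos: "H > 0"
proof -
  have "\<exists>i j. ap i j > 0 \<and> x i j > 0"
  proof (rule ccontr)
    assume "\<not> ?thesis"
    hence "\<forall>i j. ap i j > 0 \<longrightarrow> x i j = 0" using x_nn by (metis order.not_eq_order_implies_strict)
    hence "(\<Sum>(i,j)\<in>{(i,j). ap i j > 0}. x i j) = 0" by (intro sum.neutral) auto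
    thus False using x_h1 h1pos by simp
  qed
  then obtain i j where ij: "ap i j > 0" "x i j > 0" by blast
  have "hterm i j > 0" unfolding hterm_def
    by (rule divide_pos_pos[OF mult_pos_pos[OF ij(1)]]) (use ij xv_pos[OF ij(2)] xv_pos[of j i] x_sym[of i j] in auto)
  also have "hterm i j \<le> (\<Sum>j\<in>UNIV. hterm i j)" by (rule member_le_sum) (auto simp: hterm_nn)
  also have "\<dots> \<le> (\<Sum>i\<in>UNIV. \<Sum>j\<in>UNIV. hterm i j)"
    by (rule member_le_sum[where f="\<lambda>i. \<Sum>j\<in>UNIV. hterm i j"]) (auto simp: hterm_nn sum_nonneg)
  finally show ?thesis using H_eq by simp
qed

end

locale PSG = PS +
  assumes xG: "x \<in> Gamma adj a p h1"
begin

lemma gam_y: assumes "x i j > 0" shows "yfun a p x i j = H"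
proof -
  have "Ffun a p x i j = 0" using xG unfolding Gamma_def by auto
  thus ?thesis using assms unfolding Ffun_def by auto
qed

lemma gam_ap: assumes "x i j > 0" shows "ap i j > 0"
proof -
  have "yfun a p x i j \<noteq> 0" using gam_y[OF assms] H_pos by simp
  hence "ap i j \<noteq> 0" unfolding yfun_def by (auto split: if_splits)
  thus ?thesis using ap_nn[of i j] by (metis order_le_less)
qed

lemma gam_y': assumes "x i j > 0" shows "ap i j * x i j / (xv i * xv j) = H"
proof -
  have "ap i j \<noteq> 0" using gam_ap[OF assms] by (metis less_irrefl)
  thus ?thesis using gam_y[OF assms] unfolding yfun_def by (simp only: if_False)
qed

lemma gam_ap_eq: assumes "x i j > 0" shows "ap i j = H * xv i * xv j / x i j"
  using gam_y'[OF assms] xv_pos[OF assms] xv_pos[of j i] assms x_sym[of i j]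
  by (auto simp: field_simps)

end


context PS begin

abbreviation "\<xi> \<equiv> evec adj x"

lemma edge_ends_prop: assumes "e \<in> edges adj"
  shows "adj (fst (edge_ends adj e)) (snd (edge_ends adj e)) \<and> e = {fst (edge_ends adj e), snd (edge_ends adj e)}"
proof -
  obtain i j where "adj i j" "e = {i,j}" using assms unfolding edges_def by blast
  hence "\<exists>z. (case z of (i, j) \<Rightarrow> adj i j \<and> e = {i, j})" by blast
  hence "case edge_ends adj e of (i, j) \<Rightarrow> adj i j \<and> e = {i, j}"
    unfolding edge_ends_def by (rule someI_ex)
  thus ?thesis by (simp add: case_prod_beta)
qed

lemma evec_eq: assumes "adj i j" shows "\<xi> {i,j} = x i j"
proof -
  have e: "{i,j} \<in> edges adj" using assms unfolding edges_def by blast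
  let ?i = "fst (edge_ends adj {i,j})" and ?j = "snd (edge_ends adj {i,j})"
  have "{i,j} = {?i, ?j}" using edge_ends_prop[OF e] by simp
  hence "(?i = i \<and> ?j = j) \<or> (?i = j \<and> ?j = i)" by (auto simp: doubleton_eq_iff)
  moreover have "\<xi> {i,j} = x ?i ?j" unfolding evec_def by (simp add: case_prod_beta)
  ultimately show ?thesis using x_sym by auto
qed

lemma arr_of_evec: "arr_of adj \<xi> = x"
  by (intro ext) (auto simp: arr_of_def evec_eq x_adj)

lemma edges_irr: assumes "e \<in> edges adj" obtains i j where "adj i j" "e = {i,j}" "i \<noteq> j"
  using assms adj_irrefl unfolding edges_def by blast

definition "dd f i j = (if {i,j} = f then 1 else 0 :: real)"
definition "di f i = (if i \<in> f then 1 else 0 :: real)"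
definition "Xt f t i j = x i j + (t - \<xi> f) * dd f i j"
definition "Vt f t i = xv i + (t - \<xi> f) * di f i"

lemma arr_upd: assumes "f \<in> edges adj" shows "arr_of adj (\<xi>(f := t)) = Xt f t"
proof (intro ext)
  fix i j
  obtain k l where kl: "adj k l" "f = {k,l}" using assms unfolding edges_def by blast
  show "arr_of adj (\<xi>(f := t)) i j = Xt f t i j"
  proof (cases "adj i j")
    case True
    thus ?thesis using kl evec_eq[OF True] evec_eq[OF kl(1)] by (auto simp: arr_of_def Xt_def dd_def)
  next
    case False
    have "{i,j} \<noteq> f" using False kl adj_sym by (auto simp: doubleton_eq_iff)
    thus ?thesis using False x_adj by (simp add: arr_of_def Xt_def dd_def)
  qed
qed

lemma sum_dd: assumes "f \<in> edges adj" shows "(\<Sum>j\<in>UNIV. dd f i j) = di f i"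
proof -
  obtain k l where kl: "adj k l" "f = {k,l}" "k \<noteq> l" using edges_irr[OF assms] by blast
  have "(\<Sum>j\<in>UNIV. dd f i j) = card {j. {i,j} = f}"
    unfolding dd_def by (simp add: sum.If_cases)
  also have "\<dots> = di f i"
  proof (cases "i = k")
    case True
    hence "{j. {i,j} = f} = {l}" using kl by (auto simp: doubleton_eq_iff)
    thus ?thesis using True kl by (simp add: di_def)
  next
    case F1: False
    show ?thesis
    proof (cases "i = l")
      case True
      hence "{j. {i,j} = f} = {k}" using kl by (auto simp: doubleton_eq_iff)
      thus ?thesis using True kl by (simp add: di_def)
    next
      case False
      hence "{j. {i,j} = f} = {}" using kl F1 by (auto simp: doubleton_eq_iff)
      thus ?thesis using False F1 kl by (simp add: di_def)
    qed
  qed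
  finally show ?thesis .
qed

lemma vsum_Xt: assumes "f \<in> edges adj" shows "vsum (Xt f t) i = Vt f t i"
  unfolding vsum_def Xt_def Vt_def
  by (simp add: sum.distrib sum_distrib_left[symmetric] sum_dd[OF assms] xv_def')

lemma Xt0: "Xt f (\<xi> f) = x" by (intro ext) (simp add: Xt_def)
lemma Vt0: "Vt f (\<xi> f) i = xv i" by (simp add: Vt_def)

definition "Yd f i j = ap i j * (dd f i j * (xv i * xv j) - x i j * (di f i * xv j + xv i * di f j)) / (xv i * xv j)^2"
definition "hdr f i j = ap i j * (2 * x i j * dd f i j * (xv i * xv j) - (x i j)^2 * (di f i * xv j + xv i * di f j)) / (xv i * xv j)^2"
definition "Hd f = (\<Sum>i\<in>UNIV. \<Sum>j\<in>UNIV. if ap i j > 0 then hdr f i j else 0)"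

lemma deriv_Xt: "((\<lambda>t. Xt f t i j) has_real_derivative dd f i j) (at t0)"
  unfolding Xt_def by (rule DERIV_cong, (rule derivative_eq_intros refl)+) simp

lemma deriv_Vt: "((\<lambda>t. Vt f t i) has_real_derivative di f i) (at t0)"
  unfolding Vt_def by (rule DERIV_cong, (rule derivative_eq_intros refl)+) simp

lemma deriv_VV: "((\<lambda>t. Vt f t i * Vt f t j) has_real_derivative di f i * xv j + xv i * di f j) (at (\<xi> f))"
  by (rule DERIV_cong[OF DERIV_mult'[OF deriv_Vt deriv_Vt]]) (simp add: Vt0 algebra_simps)

lemma deriv_XX: "((\<lambda>t. Xt f t i j * Xt f t i j) has_real_derivative 2 * x i j * dd f i j) (at (\<xi> f))"
  by (rule DERIV_cong[OF DERIV_mult'[OF deriv_Xt deriv_Xt]]) (simp add: Xt0 algebra_simps)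

lemma deriv_y: assumes "xv i > 0" "xv j > 0"
  shows "((\<lambda>t. ap i j * Xt f t i j / (Vt f t i * Vt f t j)) has_real_derivative Yd f i j) (at (\<xi> f))"
proof -
  have "((\<lambda>t. ap i j * Xt f t i j / (Vt f t i * Vt f t j)) has_real_derivative
     ((ap i j * dd f i j) * (Vt f (\<xi> f) i * Vt f (\<xi> f) j) - ap i j * Xt f (\<xi> f) i j * (di f i * xv j + xv i * di f j))
       / ((Vt f (\<xi> f) i * Vt f (\<xi> f) j) * (Vt f (\<xi> f) i * Vt f (\<xi> f) j))) (at (\<xi> f))"
    using assms
    by (intro DERIV_divide DERIV_cmult deriv_Xt deriv_VV) (auto simp: Vt0)
  thus ?thesis by (simp add: Vt0 Xt0 Yd_def power2_eq_square algebra_simps)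
qed

lemma deriv_h: assumes "xv i > 0" "xv j > 0"
  shows "((\<lambda>t. ap i j * (Xt f t i j)^2 / (Vt f t i * Vt f t j)) has_real_derivative hdr f i j) (at (\<xi> f))"
proof -
  have "((\<lambda>t. ap i j * (Xt f t i j * Xt f t i j) / (Vt f t i * Vt f t j)) has_real_derivative
     ((ap i j * (2 * x i j * dd f i j)) * (Vt f (\<xi> f) i * Vt f (\<xi> f) j) - ap i j * (Xt f (\<xi> f) i j * Xt f (\<xi> f) i j) * (di f i * xv j + xv i * di f j))
       / ((Vt f (\<xi> f) i * Vt f (\<xi> f) j) * (Vt f (\<xi> f) i * Vt f (\<xi> f) j))) (at (\<xi> f))"
    using assms
    by (intro DERIV_divide DERIV_cmult deriv_XX deriv_VV) (auto simp: Vt0)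
  thus ?thesis unfolding power2_eq_square[of "Xt f _ i j"] by (simp add: Vt0 Xt0 hdr_def power2_eq_square algebra_simps)
qed

lemma deriv_Hsm: assumes "f \<in> edges adj"
  shows "((\<lambda>t. Hsm a p (Xt f t)) has_real_derivative Hd f) (at (\<xi> f))"
proof -
  have eq: "Hsm a p (Xt f t) = (\<Sum>i\<in>UNIV. \<Sum>j\<in>UNIV. if ap i j > 0 then ap i j * (Xt f t i j)^2 / (Vt f t i * Vt f t j) else 0)" for t
    unfolding Hsm_def pair_sum vsum_Xt[OF assms] by simp
  show ?thesis unfolding eq Hd_def
  proof (intro DERIV_sum)
    fix i j
    show "((\<lambda>t. if ap i j > 0 then ap i j * (Xt f t i j)^2 / (Vt f t i * Vt f t j) else 0) has_real_derivative
      (if ap i j > 0 then hdr f i j else 0)) (at (\<xi> f))"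
    proof (cases "ap i j > 0")
      case True
      have "xv i > 0" using xv_pos_ap'[OF True] .
      moreover have "xv j > 0" using xv_pos_ap'[of j i] True ap_sym by simp
      ultimately show ?thesis using True deriv_h by simp
    qed simp
  qed
qed

lemma deriv_F: assumes e: "e \<in> edges adj" and f: "f \<in> edges adj"
    and ij: "edge_ends adj e = (i, j)"
  shows "((\<lambda>t. Fsm adj a p (\<xi>(f := t)) e) has_real_derivative
     dd f i j * (yfun a p x i j - H) + x i j * ((if ap i j = 0 then 0 else Yd f i j) - Hd f)) (at (\<xi> f))"
proof -
  have eq: "Fsm adj a p (\<xi>(f := t)) e = Xt f t i j * ((if ap i j = 0 then 0 else ap i j * Xt f t i j / (Vt f t i * Vt f t j)) - Hsm a p (Xt f t))" for t
    unfolding Fsm_def ij arr_upd[OF f] by (simp add: yfun_def vsum_Xt[OF f])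
  have dY: "((\<lambda>t. if ap i j = 0 then 0 else ap i j * Xt f t i j / (Vt f t i * Vt f t j)) has_real_derivative
      (if ap i j = 0 then 0 else Yd f i j)) (at (\<xi> f))"
  proof (cases "ap i j = 0")
    case False
    hence pos: "ap i j > 0" using ap_nn[of i j] by linarith
    have "xv i > 0" using xv_pos_ap'[OF pos] .
    moreover have "xv j > 0" using xv_pos_ap'[of j i] pos ap_sym by simp
    ultimately show ?thesis using False deriv_y by simp
  qed simp
  have "((\<lambda>t. Fsm adj a p (\<xi>(f := t)) e) has_real_derivative
     Xt f (\<xi> f) i j * ((if ap i j = 0 then 0 else Yd f i j) - Hd f) +
     dd f i j * ((if ap i j = 0 then 0 else ap i j * Xt f (\<xi> f) i j / (Vt f (\<xi> f) i * Vt f (\<xi> f) j)) - Hsm a p (Xt f (\<xi> f)))) (at (\<xi> f))"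
    unfolding eq by (intro DERIV_mult' deriv_Xt DERIV_diff dY deriv_Hsm f)
  moreover have "(if ap i j = 0 then 0 else ap i j * Xt f (\<xi> f) i j / (Vt f (\<xi> f) i * Vt f (\<xi> f) j)) = yfun a p x i j"
    by (simp add: Xt0 Vt0 yfun_def)
  ultimately show ?thesis by (simp add: Xt0 Hsm_eq algebra_simps)
qed

lemma jac_eq: assumes e: "e \<in> edges adj" and f: "f \<in> edges adj"
    and ij: "edge_ends adj e = (i, j)"
  shows "jac adj a p x e f = dd f i j * (yfun a p x i j - H) + x i j * ((if ap i j = 0 then 0 else Yd f i j) - Hd f)"
  unfolding jac_def by (rule DERIV_imp_deriv[OF deriv_F[OF assms]])

end


context PS begin

definition "cc e f = (\<Sum>v\<in>e \<inter> f. 1 / xv v)"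

lemma cc_sym: "cc e f = cc f e" unfolding cc_def by (simp add: Int_commute)

lemma cc_pair: assumes "i \<noteq> j" shows "cc {i,j} f = di f i / xv i + di f j / xv j"
proof -
  consider "i \<in> f" "j \<in> f" | "i \<in> f" "j \<notin> f" | "i \<notin> f" "j \<in> f" | "i \<notin> f" "j \<notin> f" by blast
  thus ?thesis
  proof cases
    case 1 hence "{i,j} \<inter> f = {i,j}" by auto
    thus ?thesis using 1 assms by (simp add: cc_def di_def)
  next
    case 2 hence "{i,j} \<inter> f = {i}" by auto
    thus ?thesis using 2 assms by (simp add: cc_def di_def)
  next
    case 3 hence "{i,j} \<inter> f = {j}" by auto
    thus ?thesis using 3 assms by (simp add: cc_def di_def)
  next
    case 4 hence "{i,j} \<inter> f = {}" by auto
    thus ?thesis using 4 assms by (simp add: cc_def di_def)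
  qed
qed

lemma sum_di: assumes "f \<in> edges adj" shows "(\<Sum>i\<in>UNIV. di f i) = 2"
proof -
  obtain k l where kl: "adj k l" "f = {k,l}" "k \<noteq> l" using edges_irr[OF assms] by blast
  have "(\<Sum>i\<in>UNIV. di f i) = card f" unfolding di_def by (simp add: sum.If_cases)
  thus ?thesis using kl by simp
qed

lemma ends: assumes "e \<in> edges adj" "edge_ends adj e = (i,j)"
  shows "adj i j" "e = {i,j}" "i \<noteq> j" "\<xi> e = x i j"
proof -
  show "adj i j" "e = {i,j}" using edge_ends_prop[OF assms(1)] assms(2) by auto
  thus "i \<noteq> j" "\<xi> e = x i j" using adj_irrefl evec_eq by auto
qed

lemma jacJ1: assumes e: "e \<in> edges adj" and f: "f \<in> edges adj" and ef: "e \<noteq> f" and z: "\<xi> e = 0"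
  shows "jac adj a p x e f = 0"
proof -
  obtain i j where ij: "edge_ends adj e = (i,j)" by (cases "edge_ends adj e") auto
  note E = ends[OF e ij]
  have "dd f i j = 0" using E ef by (simp add: dd_def)
  thus ?thesis using jac_eq[OF e f ij] E z by simp
qed

lemma jacJ2: assumes e: "e \<in> edges adj" and z: "\<xi> e = 0"
  shows "jac adj a p x e e = - H"
proof -
  obtain i j where ij: "edge_ends adj e = (i,j)" by (cases "edge_ends adj e") auto
  note E = ends[OF e ij]
  have "dd e i j = 1" using E by (simp add: dd_def)
  moreover have "yfun a p x i j = 0" using E z by (simp add: yfun_def)
  ultimately show ?thesis using jac_eq[OF e e ij] E z by simp
qed

end

context PSG begin

lemma Hd_zero: assumes f: "f \<in> edges adj" and fp: "\<xi> f > 0" shows "Hd f = 0"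
proof -
  obtain k l where kl: "adj k l" "f = {k,l}" "k \<noteq> l" using edges_irr[OF f] by blast
  have xkl: "x k l > 0" using fp evec_eq[OF kl(1)] kl by simp
  have xvf: "i \<in> f \<Longrightarrow> xv i > 0" for i using kl xkl xv_pos[OF xkl] xv_pos[of l k] x_sym[of k l] by auto
  have pt: "(if ap i j > 0 then hdr f i j else 0) = H * (2 * dd f i j - x i j * (di f i / xv i + di f j / xv j))" for i j
  proof (cases "x i j > 0")
    case True
    have ap: "ap i j > 0" by (rule gam_ap[OF True])
    have p1: "xv i > 0" using xv_pos[OF True] . have p2: "xv j > 0" using xv_pos[of j i] True x_sym[of i j] by simp
    have "hdr f i j = H * (2 * dd f i j - x i j * (di f i / xv i + di f j / xv j))"
      unfolding hdr_def gam_ap_eq[OF True] using True p1 p2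
      by (simp add: field_simps power2_eq_square)
    thus ?thesis using ap by simp
  next
    case False
    hence x0: "x i j = 0" using x_nn[of i j] by linarith
    have "{i,j} \<noteq> f"
    proof
      assume "{i,j} = f"
      hence "(i = k \<and> j = l) \<or> (i = l \<and> j = k)" using kl by (auto simp: doubleton_eq_iff)
      thus False using x0 xkl x_sym[of k l] by auto
    qed
    hence "dd f i j = 0" by (simp add: dd_def)
    thus ?thesis using x0 by (simp add: hdr_def)
  qed
  have s1: "(\<Sum>i\<in>UNIV. \<Sum>j\<in>UNIV. dd f i j) = 2" using sum_dd[OF f] sum_di[OF f] by simp
  have s2: "(\<Sum>i\<in>UNIV. \<Sum>j\<in>UNIV. x i j * (di f i / xv i)) = 2"
  proof -
    have "(\<Sum>i\<in>UNIV. \<Sum>j\<in>UNIV. x i j * (di f i / xv i)) = (\<Sum>i\<in>UNIV. xv i * (di f i / xv i))"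
      by (intro sum.cong refl) (simp only: sum_distrib_right[symmetric] xv_def')
    also have "\<dots> = (\<Sum>i\<in>UNIV. di f i)"
      by (intro sum.cong refl) (auto simp: di_def dest: xvf)
    finally show ?thesis using sum_di[OF f] by simp
  qed
  have s3: "(\<Sum>i\<in>UNIV. \<Sum>j\<in>UNIV. x i j * (di f j / xv j)) = 2"
  proof -
    have "(\<Sum>i\<in>UNIV. \<Sum>j\<in>UNIV. x i j * (di f j / xv j)) = (\<Sum>j\<in>UNIV. \<Sum>i\<in>UNIV. x j i * (di f j / xv j))"
      by (subst sum.swap) (simp add: x_sym)
    also have "\<dots> = 2" by (rule s2)
    finally show ?thesis .
  qed
  have "Hd f = (\<Sum>i\<in>UNIV. \<Sum>j\<in>UNIV. H * (2 * dd f i j - x i j * (di f i / xv i + di f j / xv j)))"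
    unfolding Hd_def pt by simp
  also have "\<dots> = H * (2 * (\<Sum>i\<in>UNIV. \<Sum>j\<in>UNIV. dd f i j) - (\<Sum>i\<in>UNIV. \<Sum>j\<in>UNIV. x i j * (di f i / xv i))
      - (\<Sum>i\<in>UNIV. \<Sum>j\<in>UNIV. x i j * (di f j / xv j)))"
    by (simp add: sum_distrib_left sum_subtractf sum.distrib algebra_simps)
  also have "\<dots> = 0" using s1 s2 s3 by simp
  finally show ?thesis .
qed

lemma jacJ3: assumes e: "e \<in> edges adj" and f: "f \<in> edges adj" and ep: "\<xi> e > 0" and fp: "\<xi> f > 0"
  shows "jac adj a p x e f = H * ((if e = f then 1 else 0) - \<xi> e * cc e f)"
proof -
  obtain i j where ij: "edge_ends adj e = (i,j)" by (cases "edge_ends adj e") auto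
  note E = ends[OF e ij]
  have xij: "x i j > 0" using ep E by simp
  have p1: "xv i > 0" using xv_pos[OF xij] . have p2: "xv j > 0" using xv_pos[of j i] xij x_sym[of i j] by simp
  have apn: "ap i j \<noteq> 0" using gam_ap[OF xij] by (metis less_irrefl)
  have dde: "dd f i j = (if e = f then 1 else 0)" using E by (auto simp: dd_def)
  have "jac adj a p x e f = x i j * Yd f i j"
    using jac_eq[OF e f ij] gam_y[OF xij] Hd_zero[OF f fp] apn by simp
  also have "\<dots> = H * (dd f i j - x i j * (di f i / xv i + di f j / xv j))"
    unfolding Yd_def gam_ap_eq[OF xij] using xij p1 p2 by (simp add: field_simps power2_eq_square)
  also have "\<dots> = H * ((if e = f then 1 else 0) - \<xi> e * cc e f)"
    using dde E cc_pair[OF E(3)] by simp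
  finally show ?thesis .
qed

end


lemma card_le1_eq: fixes A :: "'a::finite set" assumes "card A \<le> 1" "n \<in> A" shows "A = {n}"
proof -
  have "m = n" if "m \<in> A" for m
  proof (rule ccontr)
    assume "m \<noteq> n"
    hence "card {m,n} \<le> card A" using that assms by (intro card_mono) auto
    thus False using \<open>m \<noteq> n\<close> assms by simp
  qed
  thus ?thesis using assms(2) by blast
qed

lemma leaf_eq: fixes S :: "'v::finite \<Rightarrow> 'v \<Rightarrow> bool"
  assumes "ndeg S l \<le> 1" "S l n" shows "{m. S l m} = {n}"
proof -
  have "card {m. S l m} \<le> 1" "n \<in> {m. S l m}" using assms unfolding ndeg_def by auto
  thus ?thesis by (rule card_le1_eq)
qed

lemma deg2_other: fixes S :: "'v::finite \<Rightarrow> 'v \<Rightarrow> bool"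
  assumes "ndeg S n \<ge> 2" shows "\<exists>l'. S n l' \<and> l' \<noteq> l"
proof (rule ccontr)
  assume "\<not> ?thesis"
  hence "{m. S n m} \<subseteq> {l}" by auto
  hence "card {m. S n m} \<le> card {l}" by (intro card_mono) auto
  thus False using assms unfolding ndeg_def by simp
qed

lemma two_nb_deg2: fixes S :: "'v::finite \<Rightarrow> 'v \<Rightarrow> bool"
  assumes "S n l" "S n l'" "l \<noteq> l'" shows "ndeg S n \<ge> 2"
proof -
  have "card {l,l'} \<le> card {m. S n m}" using assms by (intro card_mono) auto
  thus ?thesis using assms unfolding ndeg_def by simp
qed

lemma closure_rtranclp:
  assumes "\<And>w w'. w \<in> C \<Longrightarrow> S w w' \<Longrightarrow> w' \<in> C" "c \<in> C" "S\<^sup>*\<^sup>* c w" shows "w \<in> C"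
  using assms(3)
proof (induction rule: rtranclp_induct)
  case base show ?case using assms(2) .
next
  case (step y z) show ?case using assms(1)[OF step(3) step(2)] .
qed

lemma rtranclp_sym: assumes "\<And>i j. S i j \<Longrightarrow> S j i" "S\<^sup>*\<^sup>* i j" shows "S\<^sup>*\<^sup>* j i"
  using assms(2)
proof (induction rule: rtranclp_induct)
  case (step y z)
  have "S z y" using assms(1) step(2) .
  thus ?case using step(3) by (meson converse_rtranclp_into_rtranclp)
qed simp

definition "P2 S = (\<forall>i k. S\<^sup>*\<^sup>* i k \<longrightarrow> ndeg S i \<ge> 2 \<longrightarrow> ndeg S k \<ge> 2 \<longrightarrow> i = k)"

lemma P2_edge: assumes "P2 S" "S n l" "n \<noteq> l" shows "ndeg S n \<le> 1 \<or> ndeg S l \<le> 1"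
proof (rule ccontr)
  assume "\<not> ?thesis"
  hence "ndeg S n \<ge> 2" "ndeg S l \<ge> 2" by auto
  moreover have "S\<^sup>*\<^sup>* n l" using assms(2) by simp
  ultimately show False using assms(1,3) unfolding P2_def by blast
qed

lemma P2_star_nb: fixes S :: "'v::finite \<Rightarrow> 'v \<Rightarrow> bool"
  assumes sym: "\<And>i j. S i j \<Longrightarrow> S j i" and irr: "\<And>i. \<not> S i i"
    and P: "P2 S" and l: "{m. S l m} = {n}" and nl': "S n l'"
  shows "{m. S l' m} = {n}"
proof (cases "l' = l")
  case True
  thus ?thesis using l by simp
next
  case False
  have "S n l" using l sym by auto
  hence "ndeg S n \<ge> 2" using two_nb_deg2[of S n l l'] nl' False by simp
  moreover have "n \<noteq> l'" using irr nl' by auto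
  ultimately have "ndeg S l' \<le> 1" using P2_edge[OF P nl'] by linarith
  thus ?thesis using leaf_eq sym[OF nl'] by blast
qed

lemma P2_from_local: fixes S :: "'v::finite \<Rightarrow> 'v \<Rightarrow> bool"
  assumes sym: "\<And>i j. S i j \<Longrightarrow> S j i"
    and loc: "\<And>b a. S b a \<Longrightarrow> ndeg S b \<ge> 2 \<Longrightarrow> ndeg S a \<ge> 2 \<Longrightarrow> False"
  shows "P2 S"
  unfolding P2_def
proof (intro allI impI)
  fix i k assume ik: "S\<^sup>*\<^sup>* i k" and di: "ndeg S i \<ge> 2" and dk: "ndeg S k \<ge> 2"
  have nb: "\<And>m w. S i m \<Longrightarrow> S m w \<Longrightarrow> w = i"
  proof -
    fix m w assume im: "S i m" and mw: "S m w"
    have "ndeg S m \<le> 1"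
    proof (rule ccontr)
      assume "\<not> ndeg S m \<le> 1" hence "ndeg S m \<ge> 2" by simp
      thus False by (rule loc[OF im di])
    qed
    hence "{u. S m u} = {i}" using leaf_eq sym[OF im] by blast
    thus "w = i" using mw by auto
  qed
  have "k \<in> {i} \<union> {m. S i m}"
  proof (rule closure_rtranclp[OF _ _ ik])
    fix w w' assume w: "w \<in> {i} \<union> {m. S i m}" and ww: "S w w'"
    show "w' \<in> {i} \<union> {m. S i m}"
    proof (cases "w = i")
      case True thus ?thesis using ww by simp
    next
      case False hence "S i w" using w by simp
      thus ?thesis using nb[OF _ ww] by simp
    qed
  qed simp
  thus "i = k"
  proof
    assume "k \<in> {m. S i m}"
    thus "i = k" using loc[of i k] di dk by auto
  qed simp
qed



context PS begin

definition "Pe = {e \<in> edges adj. \<xi> e > 0}"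
abbreviation "Sx \<equiv> graph_of x"

lemma Sx_iff: "Sx i j \<longleftrightarrow> x i j > 0" by (simp add: graph_of_def)
lemma Sx_sym: "Sx i j \<Longrightarrow> Sx j i" using x_sym by (simp add: graph_of_def)
lemma Sx_irr: "\<not> Sx i i" using x_irr by (simp add: graph_of_def)

lemma Pe_iff: "g \<in> Pe \<longleftrightarrow> (\<exists>i j. g = {i,j} \<and> x i j > 0)"
proof
  assume g: "g \<in> Pe"
  obtain i j where ij: "edge_ends adj g = (i,j)" by (cases "edge_ends adj g") auto
  note E = ends[OF _ ij]
  show "\<exists>i j. g = {i,j} \<and> x i j > 0" using g E unfolding Pe_def by auto
next
  assume "\<exists>i j. g = {i,j} \<and> x i j > 0"
  then obtain i j where ij: "g = {i,j}" "x i j > 0" by blast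
  have "adj i j" using x_pos_adj[OF ij(2)] .
  thus "g \<in> Pe" using ij evec_eq unfolding Pe_def edges_def by auto
qed

lemma Pe_sub: "Pe \<subseteq> edges adj" unfolding Pe_def by auto

lemma Z_zero: assumes "e \<in> edges adj" "e \<notin> Pe" shows "\<xi> e = 0"
proof -
  obtain i j where ij: "edge_ends adj e = (i,j)" by (cases "edge_ends adj e") auto
  note E = ends[OF assms(1) ij]
  thus ?thesis using assms x_nn[of i j] unfolding Pe_def by auto
qed

lemma sum_rest: assumes "\<forall>f\<in>edges adj - Pe. v f = 0"
  shows "(\<Sum>f\<in>edges adj. complex_of_real (jac adj a p x e f) * v f) = (\<Sum>f\<in>Pe. complex_of_real (jac adj a p x e f) * v f)"
  by (rule sum.mono_neutral_right) (use assms Pe_sub in auto)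

lemma rowZ: assumes e: "e \<in> edges adj" "e \<notin> Pe"
  shows "(\<Sum>f\<in>edges adj. complex_of_real (jac adj a p x e f) * v f) = - complex_of_real H * v e"
proof -
  have "(\<Sum>f\<in>edges adj. complex_of_real (jac adj a p x e f) * v f) = (\<Sum>f\<in>edges adj. if f = e then - complex_of_real H * v e else 0)"
    using jacJ1[OF e(1) _ _ Z_zero[OF e]] jacJ2[OF e(1) Z_zero[OF e]] by (intro sum.cong refl) auto
  also have "\<dots> = - complex_of_real H * v e" using e by simp
  finally show ?thesis .
qed

lemma rowZ0: assumes e: "e \<in> edges adj" "e \<notin> Pe" and vz: "\<forall>f\<in>edges adj - Pe. v f = 0"
  shows "(\<Sum>f\<in>edges adj. complex_of_real (jac adj a p x e f) * v f) = 0"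
proof -
  have "(\<Sum>f\<in>Pe. complex_of_real (jac adj a p x e f) * v f) = 0"
    using jacJ1[OF e(1) _ _ Z_zero[OF e]] Pe_sub e by (intro sum.neutral) auto
  thus ?thesis using sum_rest[OF vz] by simp
qed

lemma leaf_xv: assumes "{m. Sx l m} = {n}" shows "xv l = x l n"
proof -
  have "x l m = 0" if "m \<noteq> n" for m using assms that x_nn[of l m] Sx_iff by (metis mem_Collect_eq singletonD less_eq_real_def)
  hence "xv l = (\<Sum>m\<in>UNIV. if m = n then x l n else 0)" unfolding xv_def' by (intro sum.cong) auto
  thus ?thesis by simp
qed

lemma nb_set: "{g\<in>Pe. n \<in> g} = (\<lambda>j. {n,j}) ` {j. x n j > 0}"
proof
  show "{g\<in>Pe. n \<in> g} \<subseteq> (\<lambda>j. {n,j}) ` {j. x n j > 0}"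
  proof
    fix g assume g: "g \<in> {g\<in>Pe. n \<in> g}"
    then obtain i j where ij: "g = {i,j}" "x i j > 0" using Pe_iff by auto
    show "g \<in> (\<lambda>j. {n,j}) ` {j. x n j > 0}"
    proof (cases "n = i")
      case True thus ?thesis using ij by auto
    next
      case False hence "n = j" using g ij by auto
      thus ?thesis using ij x_sym[of i j] by (auto simp: insert_commute)
    qed
  qed
next
  show "(\<lambda>j. {n,j}) ` {j. x n j > 0} \<subseteq> {g\<in>Pe. n \<in> g}" using Pe_iff by auto
qed

lemma nb_sum: "(\<Sum>g\<in>{g\<in>Pe. n \<in> g}. \<xi> g) = xv n"
proof -
  have inj: "inj_on (\<lambda>j. {n,j}) {j. x n j > 0}"
    by (auto simp: inj_on_def doubleton_eq_iff)
  have "(\<Sum>g\<in>{g\<in>Pe. n \<in> g}. \<xi> g) = (\<Sum>j\<in>{j. x n j > 0}. \<xi> {n,j})"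
    unfolding nb_set by (rule sum.reindex[OF inj, unfolded comp_def])
  also have "\<dots> = (\<Sum>j\<in>{j. x n j > 0}. x n j)"
    by (intro sum.cong refl) (auto intro: evec_eq x_pos_adj)
  also have "\<dots> = xv n" unfolding xv_def'
    by (rule sum.mono_neutral_left) (auto simp: order.strict_iff_not x_nn antisym)
  finally show ?thesis .
qed

end

context PSG begin

lemma rowP: assumes e: "e \<in> Pe" and vz: "\<forall>f\<in>edges adj - Pe. v f = 0"
  shows "(\<Sum>f\<in>edges adj. complex_of_real (jac adj a p x e f) * v f)
     = complex_of_real H * v e - complex_of_real (H * \<xi> e) * (\<Sum>f\<in>Pe. complex_of_real (cc e f) * v f)"
proof -
  have eP: "e \<in> edges adj" "\<xi> e > 0" using e unfolding Pe_def by auto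
  have "(\<Sum>f\<in>Pe. complex_of_real (jac adj a p x e f) * v f)
      = (\<Sum>f\<in>Pe. (if e = f then complex_of_real H * v f else 0) - complex_of_real (H * \<xi> e) * (complex_of_real (cc e f) * v f))"
  proof (intro sum.cong refl)
    fix f assume f: "f \<in> Pe"
    hence fP: "f \<in> edges adj" "\<xi> f > 0" unfolding Pe_def by auto
    show "complex_of_real (jac adj a p x e f) * v f = (if e = f then complex_of_real H * v f else 0) - complex_of_real (H * \<xi> e) * (complex_of_real (cc e f) * v f)"
      unfolding jacJ3[OF eP(1) fP(1) eP(2) fP(2)] by (auto simp: algebra_simps)
  qed
  also have "\<dots> = complex_of_real H * v e - complex_of_real (H * \<xi> e) * (\<Sum>f\<in>Pe. complex_of_real (cc e f) * v f)"
    using e by (simp add: sum_subtractf sum_distrib_left)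
  finally show ?thesis using sum_rest[OF vz] by simp
qed

end


context PSG begin

lemma stable_part:
  assumes P: "P2 Sx" and ev: "jac_eigenvalue adj a p x mu"
  shows "Re mu \<le> 0"
proof -
  obtain v where nz: "\<exists>e\<in>edges adj. v e \<noteq> 0"
    and eq: "\<And>e. e \<in> edges adj \<Longrightarrow> (\<Sum>f\<in>edges adj. complex_of_real (jac adj a p x e f) * v f) = mu * v e"
    using ev unfolding jac_eigenvalue_def by blast
  show ?thesis
  proof (cases "\<exists>e\<in>edges adj - Pe. v e \<noteq> 0")
    case True
    then obtain e where e: "e \<in> edges adj" "e \<notin> Pe" "v e \<noteq> 0" by blast
    have "- complex_of_real H * v e = mu * v e" using rowZ[OF e(1,2)] eq[OF e(1)] by simp
    hence "mu = - complex_of_real H" using e(3) by (metis mult_cancel_right)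
    thus ?thesis using H_pos by simp
  next
    case False
    hence vz: "\<forall>f\<in>edges adj - Pe. v f = 0" by blast
    obtain e0 where e0: "e0 \<in> edges adj" "v e0 \<noteq> 0" using nz by blast
    hence e0P: "e0 \<in> Pe" using vz by blast
    then obtain i j where ij: "e0 = {i,j}" "x i j > 0" using Pe_iff by blast
    have "\<exists>n l. e0 = {n,l} \<and> x n l > 0 \<and> {m. Sx l m} = {n}"
    proof -
      have "i \<noteq> j" using ij x_irr by auto
      moreover have "Sx i j" using ij(2) Sx_iff by simp
      ultimately have "ndeg Sx i \<le> 1 \<or> ndeg Sx j \<le> 1" using P2_edge[OF P] by blast
      thus ?thesis
      proof
        assume "ndeg Sx i \<le> 1"
        hence "{m. Sx i m} = {j}" using leaf_eq[of Sx i j] ij(2) by (simp add: Sx_iff)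
        moreover have "e0 = {j,i}" using ij(1) by (simp add: insert_commute)
        moreover have "x j i > 0" using ij(2) x_sym[of i j] by simp
        ultimately show ?thesis by blast
      next
        assume "ndeg Sx j \<le> 1"
        hence "{m. Sx j m} = {i}" using leaf_eq[of Sx j i] ij(2) x_sym[of i j] by (simp add: Sx_iff)
        thus ?thesis using ij by blast
      qed
    qed
    then obtain n l where nl: "e0 = {n,l}" "x n l > 0" "{m. Sx l m} = {n}" by blast
    have xvn: "xv n > 0" using xv_pos[OF nl(2)] .
    define N where "N = {g\<in>Pe. n \<in> g}"
    define s where "s = (\<Sum>f\<in>N. v f)"
    have key: "mu * v g = - complex_of_real (H * \<xi> g / xv n) * s" if g: "g \<in> N" for g
    proof -
      have gP: "g \<in> Pe" "n \<in> g" using g unfolding N_def by auto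
      obtain i' j' where g': "g = {i',j'}" "x i' j' > 0" using Pe_iff gP(1) by blast
      obtain l' where gl: "g = {n,l'}" "x n l' > 0"
      proof (cases "n = i'")
        case True thus ?thesis using that g' by blast
      next
        case False hence "n = j'" using gP g' by auto
        thus ?thesis using that g' x_sym[of i' j'] by (metis insert_commute)
      qed
      have leaf: "{m. Sx l' m} = {n}"
        by (rule P2_star_nb[OF _ _ P nl(3)]) (use Sx_sym Sx_irr gl Sx_iff in auto)
      have nl': "n \<noteq> l'" using gl x_irr by auto
      have xig: "\<xi> g = x n l'" using gl evec_eq x_pos_adj by simp
      have xvl: "xv l' = \<xi> g" using leaf_xv[OF leaf] xig x_sym by simp
      have xgp: "\<xi> g > 0" using xig gl by simp
      have s1: "(\<Sum>f\<in>Pe. complex_of_real (di f n) * v f) = s"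
        unfolding s_def N_def by (subst sum.inter_filter, simp, intro sum.cong refl, simp add: di_def)
      have s2: "(\<Sum>f\<in>Pe. complex_of_real (di f l') * v f) = v g"
      proof -
        have "(\<Sum>f\<in>Pe. complex_of_real (di f l') * v f) = (\<Sum>f\<in>Pe. if f = g then v f else 0)"
        proof (intro sum.cong refl)
          fix f assume f: "f \<in> Pe"
          then obtain i'' j'' where f': "f = {i'',j''}" "x i'' j'' > 0" using Pe_iff by blast
          have "l' \<in> f \<longleftrightarrow> f = g"
          proof
            assume "l' \<in> f"
            then obtain m where "f = {l',m}" "x l' m > 0" using f' x_sym[of i'' j''] by (metis insert_commute insertE singletonD)
            hence "m \<in> {m. Sx l' m}" using Sx_iff by simp
            hence "m = n" using leaf by simp
            thus "f = g" using \<open>f = {l',m}\<close> gl by (simp add: insert_commute)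
          qed (use gl in auto)
          thus "complex_of_real (di f l') * v f = (if f = g then v f else 0)" by (auto simp: di_def)
        qed
        also have "\<dots> = v g" using gP by simp
        finally show ?thesis .
      qed
      have "(\<Sum>f\<in>Pe. complex_of_real (cc g f) * v f)
          = (\<Sum>f\<in>Pe. complex_of_real (1 / xv n) * (complex_of_real (di f n) * v f) + complex_of_real (1 / xv l') * (complex_of_real (di f l') * v f))"
        unfolding gl cc_pair[OF nl'] by (intro sum.cong refl) (simp add: algebra_simps)
      also have "\<dots> = complex_of_real (1 / xv n) * s + complex_of_real (1 / \<xi> g) * v g"
        unfolding sum.distrib sum_distrib_left[symmetric] s1 s2 xvl ..
      finally have cs: "(\<Sum>f\<in>Pe. complex_of_real (cc g f) * v f) = complex_of_real (1 / xv n) * s + complex_of_real (1 / \<xi> g) * v g" .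
      have "mu * v g = complex_of_real H * v g - complex_of_real (H * \<xi> g) * (complex_of_real (1 / xv n) * s + complex_of_real (1 / \<xi> g) * v g)"
        using eq[of g] rowP[OF gP(1) vz] cs Pe_sub gP(1) by auto
      also have "\<dots> = - complex_of_real (H * \<xi> g / xv n) * s"
        using xgp xvn by (simp add: field_simps)
      finally show ?thesis .
    qed
    have "mu * s = (\<Sum>g\<in>N. mu * v g)" unfolding s_def by (simp add: sum_distrib_left)
    also have "\<dots> = (\<Sum>g\<in>N. - complex_of_real (H / xv n) * s * complex_of_real (\<xi> g))"
      using key by (intro sum.cong refl) simp
    also have "\<dots> = - complex_of_real (H / xv n) * s * complex_of_real (\<Sum>g\<in>N. \<xi> g)"
      by (simp add: sum_distrib_left)
    also have "\<dots> = - complex_of_real H * s"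
      unfolding N_def nb_sum using xvn by simp
    finally have ms: "mu * s = - complex_of_real H * s" .
    show ?thesis
    proof (cases "s = 0")
      case False
      hence "mu = - complex_of_real H" using ms by (metis mult_cancel_right)
      thus ?thesis using H_pos by simp
    next
      case True
      have "e0 \<in> N" using e0P nl unfolding N_def by auto
      hence "mu * v e0 = 0" using key True by simp
      hence "mu = 0" using e0(2) by simp
      thus ?thesis by simp
    qed
  qed
qed

end


lemma sum_two: assumes "e1 \<noteq> e2" "\<And>g. g \<noteq> e1 \<Longrightarrow> g \<noteq> e2 \<Longrightarrow> F g = 0"
  shows "(\<Sum>g\<in>(UNIV::'a::finite set). F g) = F e1 + F e2"
proof -
  have "(\<Sum>g\<in>(UNIV::'a::finite set). F g) = (\<Sum>g\<in>{e1,e2}. F g)"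
    by (rule sum.mono_neutral_right) (use assms in auto)
  thus ?thesis using assms by simp
qed


context PSG begin

lemma unstable_part:
  assumes st: "\<And>mu. jac_eigenvalue adj a p x mu \<Longrightarrow> Re mu \<le> 0"
  shows "P2 Sx"
proof (rule P2_from_local)
  show "\<And>i j. Sx i j \<Longrightarrow> Sx j i" by (rule Sx_sym)
  fix b a0 assume ba: "Sx b a0" and db: "ndeg Sx b \<ge> 2" and da: "ndeg Sx a0 \<ge> 2"
  obtain c where bc: "Sx b c" "c \<noteq> a0" using deg2_other[OF db] by blast
  obtain a' where aa: "Sx a0 a'" "a' \<noteq> b" using deg2_other[OF da] by blast
  have xab: "x a0 b > 0" using ba Sx_iff x_sym by simp
  have xbc: "x b c > 0" using bc Sx_iff by simp
  have xaa: "x a0 a' > 0" using aa Sx_iff by simp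
  have ab: "a0 \<noteq> b" using xab x_irr by auto
  have bcn: "b \<noteq> c" using xbc x_irr by auto
  define e1 where "e1 = {a0,b}"
  define e2 where "e2 = {b,c}"
  have e12: "e1 \<noteq> e2" unfolding e1_def e2_def using ab bc(2) by (auto simp: doubleton_eq_iff)
  have e1P: "e1 \<in> Pe" unfolding e1_def using Pe_iff xab by blast
  have e2P: "e2 \<in> Pe" unfolding e2_def using Pe_iff xbc by blast
  have xi1: "\<xi> e1 = x a0 b" unfolding e1_def using evec_eq x_pos_adj xab by simp
  have xi2: "\<xi> e2 = x b c" unfolding e2_def using evec_eq x_pos_adj xbc by simp
  have xva: "xv a0 > x a0 b"
  proof -
    have "x a0 b + x a0 a' = (\<Sum>m\<in>{b,a'}. x a0 m)" using aa(2) by simp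
    also have "\<dots> \<le> xv a0" unfolding xv_def' by (rule sum_mono2) (auto simp: x_nn)
    finally show ?thesis using xaa by simp
  qed
  have xvc: "xv c \<ge> x b c" using x_le_xv[of c b] x_sym by simp
  have xvb: "xv b > 0" using xv_pos[OF xbc] .
  define Q where "Q e f = (if e \<in> Pe \<and> f \<in> Pe then sqrt (\<xi> e) * sqrt (\<xi> f) * cc e f else if e = f then 1 else 0)" for e f
  define sg where "sg g = (if g = e1 then 1 else if g = e2 then -1 else 0 :: real)" for g
  define z where "z g = sg g / sqrt (\<xi> g)" for g
  have Qsym: "\<And>e f. Q e f = Q f e" unfolding Q_def using cc_sym by auto
  have Qz: "Q g h * z g * z h = sg g * sg h * cc g h" if "g \<in> {e1,e2}" "h \<in> {e1,e2}" for g h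
  proof -
    have "g \<in> Pe" "h \<in> Pe" "\<xi> g > 0" "\<xi> h > 0" using that e1P e2P unfolding Pe_def by auto
    thus ?thesis unfolding Q_def z_def by (simp add: field_simps)
  qed
  have zout: "z g = 0" if "g \<noteq> e1" "g \<noteq> e2" for g using that by (simp add: z_def sg_def)
  have quad: "(\<Sum>g\<in>UNIV. \<Sum>h\<in>UNIV. Q g h * z g * z h) = 1 / xv a0 + 1 / xv c"
  proof -
    have "(\<Sum>g\<in>UNIV. \<Sum>h\<in>UNIV. Q g h * z g * z h) = (\<Sum>h\<in>UNIV. Q e1 h * z e1 * z h) + (\<Sum>h\<in>UNIV. Q e2 h * z e2 * z h)"
      by (rule sum_two[OF e12]) (simp add: zout)
    also have "\<dots> = (Q e1 e1 * z e1 * z e1 + Q e1 e2 * z e1 * z e2) + (Q e2 e1 * z e2 * z e1 + Q e2 e2 * z e2 * z e2)"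
      using sum_two[OF e12, of "\<lambda>h. Q e1 h * z e1 * z h"] sum_two[OF e12, of "\<lambda>h. Q e2 h * z e2 * z h"] zout by simp
    also have "\<dots> = cc e1 e1 - cc e1 e2 - cc e2 e1 + cc e2 e2"
      using Qz by (simp add: sg_def e12 e12[symmetric])
    also have "\<dots> = 1 / xv a0 + 1 / xv c"
      unfolding e1_def e2_def cc_pair[OF ab] cc_pair[OF bcn] using ab bcn bc(2) by (simp add: di_def)
    finally show ?thesis .
  qed
  have zsq: "(\<Sum>g\<in>UNIV. (z g)^2) = 1 / x a0 b + 1 / x b c"
  proof -
    have "(\<Sum>g\<in>UNIV. (z g)^2) = (z e1)^2 + (z e2)^2" by (rule sum_two[OF e12]) (simp add: zout)
    also have "\<dots> = 1 / x a0 b + 1 / x b c"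
      using xi1 xi2 xab xbc e12 by (simp add: z_def sg_def power_divide)
    finally show ?thesis .
  qed
  have lt: "(\<Sum>g\<in>UNIV. \<Sum>h\<in>UNIV. Q g h * z g * z h) < 1 * (\<Sum>g\<in>UNIV. (z g)^2)"
  proof -
    have "1 / xv a0 < 1 / x a0 b" using xva xab by (simp add: frac_less2)
    moreover have "1 / xv c \<le> 1 / x b c" using xvc xbc by (simp add: frac_le)
    ultimately show ?thesis unfolding quad zsq by simp
  qed
  obtain w lam where wnz: "\<exists>i. w i \<noteq> 0" and lam: "lam < 1"
    and weq: "\<And>i. (\<Sum>j\<in>UNIV. Q i j * w j) = lam * w i"
    using rayleigh[OF Qsym lt] by blast
  have wout: "w e = 0" if "e \<notin> Pe" for e
  proof -
    have "(\<Sum>j\<in>UNIV. Q e j * w j) = (\<Sum>j\<in>UNIV. if j = e then w e else 0)"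
      using that by (intro sum.cong refl) (auto simp: Q_def)
    hence "w e = lam * w e" using weq[of e] by simp
    thus ?thesis using lam by (metis mult_cancel_right2 less_irrefl)
  qed
  define vr where "vr e = (if e \<in> Pe then sqrt (\<xi> e) * w e else 0)" for e
  have win: "(\<Sum>j\<in>UNIV. Q e j * w j) = sqrt (\<xi> e) * (\<Sum>f\<in>Pe. cc e f * vr f)" if e: "e \<in> Pe" for e
  proof -
    have "(\<Sum>j\<in>UNIV. Q e j * w j) = (\<Sum>j\<in>Pe. Q e j * w j)"
      by (rule sum.mono_neutral_right) (use e in \<open>auto simp: Q_def\<close>)
    also have "\<dots> = (\<Sum>f\<in>Pe. sqrt (\<xi> e) * (cc e f * vr f))"
      using e by (intro sum.cong refl) (auto simp: Q_def vr_def)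
    finally show ?thesis by (simp add: sum_distrib_left)
  qed
  have ccv: "\<xi> e * (\<Sum>f\<in>Pe. cc e f * vr f) = lam * vr e" if e: "e \<in> Pe" for e
  proof -
    have pos: "\<xi> e > 0" using e unfolding Pe_def by auto
    have "sqrt (\<xi> e) * (\<Sum>f\<in>Pe. cc e f * vr f) = lam * w e" using weq[of e] win[OF e] by simp
    hence "sqrt (\<xi> e) * (sqrt (\<xi> e) * (\<Sum>f\<in>Pe. cc e f * vr f)) = lam * (sqrt (\<xi> e) * w e)" by (simp add: algebra_simps)
    thus ?thesis using pos e by (simp add: vr_def mult.assoc[symmetric])
  qed
  define v where "v e = complex_of_real (vr e)" for e
  define mu where "mu = complex_of_real (H * (1 - lam))"
  have vz: "\<forall>f\<in>edges adj - Pe. v f = 0" by (simp add: v_def vr_def)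
  have "jac_eigenvalue adj a p x mu"
    unfolding jac_eigenvalue_def
  proof (intro exI conjI ballI)
    obtain i where wi: "w i \<noteq> 0" using wnz by blast
    hence iP: "i \<in> Pe" using wout by blast
    hence "\<xi> i > 0" unfolding Pe_def by auto
    hence "v i \<noteq> 0" using wi iP by (simp add: v_def vr_def)
    thus "\<exists>e\<in>edges adj. v e \<noteq> 0" using iP Pe_sub by blast
  next
    fix e assume e: "e \<in> edges adj"
    show "(\<Sum>f\<in>edges adj. complex_of_real (jac adj a p x e f) * v f) = mu * v e"
    proof (cases "e \<in> Pe")
      case True
      have "(\<Sum>f\<in>edges adj. complex_of_real (jac adj a p x e f) * v f)
          = complex_of_real H * v e - complex_of_real (H * \<xi> e) * (\<Sum>f\<in>Pe. complex_of_real (cc e f) * v f)"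
        by (rule rowP[OF True vz])
      also have "(\<Sum>f\<in>Pe. complex_of_real (cc e f) * v f) = complex_of_real (\<Sum>f\<in>Pe. cc e f * vr f)"
        by (simp add: v_def)
      also have "complex_of_real H * v e - complex_of_real (H * \<xi> e) * complex_of_real (\<Sum>f\<in>Pe. cc e f * vr f)
          = complex_of_real (H * vr e - H * (\<xi> e * (\<Sum>f\<in>Pe. cc e f * vr f)))"
        by (simp add: v_def)
      also have "\<dots> = mu * v e" unfolding ccv[OF True] by (simp add: mu_def v_def algebra_simps)
      finally show ?thesis .
    next
      case False
      have "v e = 0" using False by (simp add: v_def vr_def)
      thus ?thesis using rowZ0[OF e False vz] by simp
    qed
  qed
  hence "Re mu \<le> 0" by (rule st)
  moreover have "Re mu > 0" using H_pos lam by (simp add: mu_def)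
  ultimately show False by simp
qed

end


lemma closed_pair: fixes S :: "'v::finite \<Rightarrow> 'v \<Rightarrow> bool"
  assumes sym: "\<And>i j. S i j \<Longrightarrow> S j i" and ij: "S i j" and di: "ndeg S i \<le> 1" and dj: "ndeg S j \<le> 1"
    and r: "S\<^sup>*\<^sup>* i k" shows "k \<in> {i,j}"
proof (rule closure_rtranclp[OF _ _ r])
  have li: "{m. S i m} = {j}" using leaf_eq[OF di ij] .
  have lj: "{m. S j m} = {i}" using leaf_eq[OF dj sym[OF ij]] .
  fix w w' assume w: "w \<in> {i,j}" and ww: "S w w'"
  show "w' \<in> {i,j}"
  proof (cases "w = i")
    case True hence "w' \<in> {m. S i m}" using ww by simp
    thus ?thesis using li by simp
  next
    case False hence "w = j" using w by simp
    hence "w' \<in> {m. S j m}" using ww by simp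
    thus ?thesis using lj by simp
  qed
qed simp

context PSG begin

lemma leaf_edge_ap: assumes "x u w > 0" "{m. Sx w m} = {u}" shows "ap u w = H * xv u"
proof -
  have "xv w = x u w" using leaf_xv[OF assms(2)] x_sym by simp
  thus ?thesis using gam_ap_eq[OF assms(1)] assms(1) by simp
qed

lemma center_edge: assumes P: "P2 Sx" and d: "ndeg Sx u \<ge> 2" and e: "x u w > 0" shows "ap u w = H * xv u"
proof -
  have "u \<noteq> w" using e x_irr by auto
  moreover have "Sx u w" using e Sx_iff by simp
  ultimately have "ndeg Sx w \<le> 1" using P2_edge[OF P] d by fastforce
  hence "{m. Sx w m} = {u}" using leaf_eq[of Sx w u] e x_sym[of u w] by (simp add: Sx_iff)
  thus ?thesis using leaf_edge_ap e by blast
qed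

lemma propP_of_P2: assumes P: "P2 Sx" shows "propP adj a p Sx"
  unfolding propP_def
proof (intro conjI allI impI)
  show "\<And>i k. Sx\<^sup>*\<^sup>* i k \<Longrightarrow> 2 \<le> ndeg Sx i \<Longrightarrow> 2 \<le> ndeg Sx k \<Longrightarrow> i = k" using P unfolding P2_def by blast
next
  fix i j k l assume ij: "Sx i j" and kl: "Sx k l" and ik: "Sx\<^sup>*\<^sup>* i k"
  have xij: "x i j > 0" and xkl: "x k l > 0" using ij kl Sx_iff by auto
  show "0 < ap i j" using gam_ap[OF xij] .
  have symS: "\<And>i j. Sx i j \<Longrightarrow> Sx j i" by (rule Sx_sym)
  show "ap i j = ap k l"
  proof (cases "ndeg Sx i \<ge> 2 \<or> ndeg Sx j \<ge> 2")
    case True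
    then obtain u w where uw: "(u = i \<and> w = j) \<or> (u = j \<and> w = i)" "ndeg Sx u \<ge> 2" by blast
    have xuw: "x u w > 0" using uw(1) xij x_sym[of i j] by auto
    have apij: "ap i j = H * xv u" using center_edge[OF P uw(2) xuw] uw(1) ap_sym[of i j] by auto
    have ui: "Sx\<^sup>*\<^sup>* u k"
    proof -
      have "Sx\<^sup>*\<^sup>* u i" using uw(1) ij symS by auto
      thus ?thesis using ik by simp
    qed
    show ?thesis
    proof (cases "ndeg Sx k \<ge> 2 \<or> ndeg Sx l \<ge> 2")
      case True
      then obtain u' w' where uw': "(u' = k \<and> w' = l) \<or> (u' = l \<and> w' = k)" "ndeg Sx u' \<ge> 2" by blast
      have xuw': "x u' w' > 0" using uw'(1) xkl x_sym[of k l] by auto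
      have apkl: "ap k l = H * xv u'" using center_edge[OF P uw'(2) xuw'] uw'(1) ap_sym[of k l] by auto
      have "Sx\<^sup>*\<^sup>* k u'" using uw'(1) kl by auto
      hence "Sx\<^sup>*\<^sup>* u u'" using ui by simp
      hence "u = u'" using P uw(2) uw'(2) unfolding P2_def by blast
      thus ?thesis using apij apkl by simp
    next
      case False
      hence "ndeg Sx k \<le> 1" "ndeg Sx l \<le> 1" by auto
      moreover have "Sx\<^sup>*\<^sup>* k u" using rtranclp_sym[OF _ ui] symS by blast
      ultimately have "u \<in> {k,l}" using closed_pair[of Sx k l u, OF symS kl] by blast
      hence "ndeg Sx u \<le> 1" using \<open>ndeg Sx k \<le> 1\<close> \<open>ndeg Sx l \<le> 1\<close> by auto
      thus ?thesis using uw(2) by simp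
    qed
  next
    case False
    hence di: "ndeg Sx i \<le> 1" "ndeg Sx j \<le> 1" by auto
    have "k \<in> {i,j}" using closed_pair[of Sx i j k, OF symS ij di ik] .
    moreover have "l \<in> {i,j}" using closed_pair[of Sx i j l, OF symS ij di rtranclp.rtrancl_into_rtrancl[OF ik kl]] .
    moreover have "k \<noteq> l" using xkl x_irr by auto
    ultimately have "(k = i \<and> l = j) \<or> (k = j \<and> l = i)" by auto
    thus ?thesis using ap_sym by auto
  qed
next
  fix i
  show "(\<exists>j. Sx i j) = (\<exists>j. adj i j \<and> 0 < ap i j)"
  proof
    assume "\<exists>j. Sx i j"
    then obtain j where "x i j > 0" using Sx_iff by blast
    thus "\<exists>j. adj i j \<and> 0 < ap i j" using gam_ap x_pos_adj by blast
  next
    assume h: "\<exists>j. adj i j \<and> 0 < ap i j"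
    have ne: "(\<Sum>j\<in>{j. ap i j > 0}. x i j) \<noteq> 0" using xnb xD h unfolding bdry_def by blast
    then obtain j where "x i j \<noteq> 0" by (meson sum.neutral)
    hence "x i j > 0" using x_nn[of i j] by simp
    thus "\<exists>j. Sx i j" using Sx_iff by blast
  qed
qed

end


lemma nuc_in_edge: fixes S :: "'v::finite \<Rightarrow> 'v \<Rightarrow> bool"
  assumes sym: "\<And>i j. S i j \<Longrightarrow> S j i" and irr: "\<And>i. \<not> S i i" and P: "P2 S"
    and nuc: "is_nuclei S N" and ij: "S i j" and n: "n \<in> N" and r: "S\<^sup>*\<^sup>* i n"
  shows "(n = i \<and> ndeg S j \<le> 1) \<or> (n = j \<and> ndeg S i \<le> 1)"
proof -
  have ne: "i \<noteq> j" using ij irr by auto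
  have rj: "S\<^sup>*\<^sup>* j n" using r sym[OF ij] by (meson converse_rtranclp_into_rtranclp)
  have ni: "S\<^sup>*\<^sup>* n i" using rtranclp_sym[OF _ r] sym by blast
  have nj: "S\<^sup>*\<^sup>* n j" using rtranclp_sym[OF _ rj] sym by blast
  have cases: "ndeg S n \<ge> 2 \<or> (\<forall>k. S\<^sup>*\<^sup>* n k \<longrightarrow> ndeg S k \<le> 1)" using nuc n unfolding is_nuclei_def by blast
  show ?thesis
  proof (cases "ndeg S n \<ge> 2")
    case True
    show ?thesis
    proof (cases "n = i")
      case True
      hence "ndeg S j \<le> 1" using P2_edge[OF P ij ne] \<open>ndeg S n \<ge> 2\<close> by auto
      thus ?thesis using True by simp
    next
      case F1: False
      show ?thesis
      proof (cases "n = j")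
        case True
        hence "ndeg S i \<le> 1" using P2_edge[OF P sym[OF ij]] ne \<open>ndeg S n \<ge> 2\<close> by auto
        thus ?thesis using True by simp
      next
        case False
        have "ndeg S i \<le> 1" using P r \<open>ndeg S n \<ge> 2\<close> F1 unfolding P2_def by fastforce
        moreover have "ndeg S j \<le> 1" using P rj \<open>ndeg S n \<ge> 2\<close> False unfolding P2_def by fastforce
        ultimately have "n \<in> {i,j}" using closed_pair[of S i j n, OF sym ij _ _ r] by blast
        thus ?thesis using F1 False by simp
      qed
    qed
  next
    case False
    hence all: "\<forall>k. S\<^sup>*\<^sup>* n k \<longrightarrow> ndeg S k \<le> 1" using cases by simp
    have di: "ndeg S i \<le> 1" "ndeg S j \<le> 1" using all ni nj by auto
    hence "n \<in> {i,j}" using closed_pair[of S i j n, OF sym ij _ _ r] by blast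
    thus ?thesis using di by auto
  qed
qed

lemma nuc_unique: assumes "is_nuclei S N" "n \<in> N" "S\<^sup>*\<^sup>* i n" "n' \<in> N" "S\<^sup>*\<^sup>* i n'" shows "n = n'"
  using assms unfolding is_nuclei_def by blast

context PS begin

lemma iii_ii: assumes sub: "subgraph adj S" and P: "propP adj a p S" and nuc: "is_nuclei S N"
    and G: "x \<in> GammaG adj a p h1 S N"
  shows "x \<in> Gamma adj a p h1"
proof -
  have gS: "graph_of x = S" using G unfolding GammaG_def by blast
  define Sg where "Sg = (\<Sum>j\<in>N. ap_nuc a p S j)"
  have xvN: "\<And>i. i \<in> N \<Longrightarrow> xv i = ap_nuc a p S i / (2 * Sg)" using G unfolding GammaG_def Sg_def by blast
  have Siff: "S i j \<longleftrightarrow> x i j > 0" for i j using gS Sx_iff by metis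
  have symS: "\<And>i j. S i j \<Longrightarrow> S j i" using Siff x_sym by metis
  have irrS: "\<And>i. \<not> S i i" using Siff x_irr by simp
  have P2S: "P2 S" using P unfolding propP_def P2_def by blast
  have P1: "\<And>i j k l. S i j \<Longrightarrow> S k l \<Longrightarrow> S\<^sup>*\<^sup>* i k \<Longrightarrow> ap i j = ap k l \<and> ap i j > 0"
    using P unfolding propP_def by blast
  have apn_nn: "ap_nuc a p S j \<ge> 0" for j unfolding ap_nuc_def using ap_nn by simp
  have apn_edge: "ap_nuc a p S n = ap n j" if "S n j" for n j
  proof -
    have ex: "\<exists>k. S n k" using that by blast
    have k0: "S n (SOME k. S n k)" using someI_ex[OF ex] .
    have "ap n (SOME k. S n k) = ap n j" using P1[OF k0 that] by simp
    thus ?thesis unfolding ap_nuc_def using ex by simp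
  qed
  have ynuc: "ap i j * x i j / (xv i * xv j) = 2 * Sg \<and> ap i j > 0 \<and> Sg > 0" if xij: "x i j > 0" for i j
  proof -
    have ij: "S i j" using xij Siff by simp
    obtain n where n: "n \<in> N" "S\<^sup>*\<^sup>* i n" using nuc unfolding is_nuclei_def by blast
    have apij: "ap i j > 0" using P1[OF ij ij] by simp
    have Sgpos: "ap_nuc a p S n > 0 \<Longrightarrow> Sg > 0"
    proof -
      assume h: "ap_nuc a p S n > 0"
      have "ap_nuc a p S n \<le> Sg" unfolding Sg_def by (rule member_le_sum) (use n apn_nn in auto)
      thus "Sg > 0" using h by simp
    qed
    from nuc_in_edge[OF symS irrS P2S nuc ij n]
    show ?thesis
    proof
      assume h: "n = i \<and> ndeg S j \<le> 1"
      have leaf: "{m. Sx j m} = {i}" using leaf_eq[of S j i] h symS[OF ij] gS by simp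
      have xvj: "xv j = x i j" using leaf_xv[OF leaf] x_sym by simp
      have an: "ap_nuc a p S i = ap i j" using apn_edge[OF ij] .
      have sg: "Sg > 0" using Sgpos h an apij by simp
      have "xv i = ap i j / (2 * Sg)" using xvN[of i] h n an by simp
      thus ?thesis using xvj xij apij sg xv_pos[OF xij] by (simp add: field_simps)
    next
      assume h: "n = j \<and> ndeg S i \<le> 1"
      have leaf: "{m. Sx i m} = {j}" using leaf_eq[of S i j] h ij gS by simp
      have xvi: "xv i = x i j" using leaf_xv[OF leaf] by simp
      have an: "ap_nuc a p S j = ap i j" using apn_edge[OF symS[OF ij]] ap_sym by simp
      have sg: "Sg > 0" using Sgpos h an apij by simp
      have "xv j = ap i j / (2 * Sg)" using xvN[of j] h n an by simp
      thus ?thesis using xvi xij apij sg xv_pos[of j i] x_sym[of i j] by (simp add: field_simps)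
    qed
  qed
  have Hv: "H = 2 * Sg"
  proof (cases "\<exists>i j. x i j > 0")
    case True
    then obtain i0 j0 where "x i0 j0 > 0" by blast
    hence sgp: "Sg > 0" using ynuc by blast
    have "H = (\<Sum>i\<in>UNIV. \<Sum>j\<in>UNIV. 2 * Sg * x i j)"
      unfolding Hfun_def pair_sum
    proof (intro sum.cong refl)
      fix i j
      show "(if 0 < x i j then ap i j * (x i j)\<^sup>2 / (xv i * xv j) else 0) = 2 * Sg * x i j"
      proof (cases "x i j > 0")
        case True
        have "ap i j * (x i j)\<^sup>2 / (xv i * xv j) = x i j * (ap i j * x i j / (xv i * xv j))"
          by (simp add: power2_eq_square)
        thus ?thesis using ynuc[OF True] True by simp
      next
        case False thus ?thesis using x_nn[of i j] by simp
      qed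
    qed
    also have "\<dots> = 2 * Sg * (\<Sum>i\<in>UNIV. \<Sum>j\<in>UNIV. x i j)" by (simp add: sum_distrib_left)
    also have "\<dots> = 2 * Sg" using x_total pair_sum_UNIV[of x] by simp
    finally show ?thesis .
  next
    case False
    hence "\<forall>i j. x i j = 0" using x_nn by (metis less_eq_real_def)
    hence "(\<Sum>(i,j)\<in>(UNIV::('v\<times>'v) set). x i j) = 0" by simp
    thus ?thesis using x_total by simp
  qed
  have "\<forall>i j. Ffun a p x i j = 0"
  proof (intro allI)
    fix i j
    show "Ffun a p x i j = 0"
    proof (cases "x i j = 0")
      case True thus ?thesis by (simp add: Ffun_def)
    next
      case False
      hence xij: "x i j > 0" using x_nn[of i j] by simp
      have "ap i j > 0" using ynuc[OF xij] by blast
      hence "ap i j \<noteq> 0" by (metis less_irrefl)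
      hence "yfun a p x i j = 2 * Sg" using ynuc[OF xij] unfolding yfun_def by (simp only: if_False)
      thus ?thesis using Hv by (simp add: Ffun_def)
    qed
  qed
  thus ?thesis using xD unfolding Gamma_def by blast
qed

end


context PSG begin

definition "cmp i = {k. Sx\<^sup>*\<^sup>* i k}"
definition "pick C = (SOME k. k \<in> C \<and> (ndeg Sx k \<ge> 2 \<or> (\<forall>k'\<in>C. ndeg Sx k' \<le> 1)))"
definition "nuc i = pick (cmp i)"

lemma cmp_eq: assumes "Sx\<^sup>*\<^sup>* i j" shows "cmp i = cmp j"
proof -
  have "Sx\<^sup>*\<^sup>* j i" using rtranclp_sym[OF _ assms] Sx_sym by blast
  thus ?thesis using assms unfolding cmp_def by (auto intro: rtranclp_trans)
qed

lemma nuc_prop: "nuc i \<in> cmp i \<and> (ndeg Sx (nuc i) \<ge> 2 \<or> (\<forall>k'\<in>cmp i. ndeg Sx k' \<le> 1))"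
proof -
  have "\<exists>k. k \<in> cmp i \<and> (ndeg Sx k \<ge> 2 \<or> (\<forall>k'\<in>cmp i. ndeg Sx k' \<le> 1))"
  proof (cases "\<exists>k\<in>cmp i. ndeg Sx k \<ge> 2")
    case True thus ?thesis by blast
  next
    case False
    hence "\<forall>k'\<in>cmp i. ndeg Sx k' \<le> 1" by auto
    moreover have "i \<in> cmp i" unfolding cmp_def by simp
    ultimately show ?thesis by blast
  qed
  thus ?thesis unfolding nuc_def pick_def by (rule someI_ex)
qed

lemma nuc_conn: "Sx\<^sup>*\<^sup>* i (nuc i)" using nuc_prop unfolding cmp_def by blast

lemma nuc_same: assumes "Sx\<^sup>*\<^sup>* i j" shows "nuc i = nuc j"
  unfolding nuc_def using cmp_eq[OF assms] by simp

lemma is_nuc: "is_nuclei Sx (range nuc)"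
  unfolding is_nuclei_def
proof (intro conjI allI ballI)
  fix i
  show "\<exists>!n. n \<in> range nuc \<and> Sx\<^sup>*\<^sup>* i n"
  proof (rule ex1I[of _ "nuc i"])
    show "nuc i \<in> range nuc \<and> Sx\<^sup>*\<^sup>* i (nuc i)" using nuc_conn by simp
  next
    fix n assume n: "n \<in> range nuc \<and> Sx\<^sup>*\<^sup>* i n"
    then obtain m where m: "n = nuc m" by blast
    have "Sx\<^sup>*\<^sup>* m n" using nuc_conn m by simp
    hence "nuc m = nuc n" by (rule nuc_same)
    moreover have "nuc i = nuc n" using n nuc_same by blast
    ultimately show "n = nuc i" using m by simp
  qed
next
  fix n assume "n \<in> range nuc"
  then obtain m where m: "n = nuc m" by blast
  have cm: "cmp m = cmp n" using cmp_eq nuc_conn m by simp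
  show "ndeg Sx n \<ge> 2 \<or> (\<forall>k. Sx\<^sup>*\<^sup>* n k \<longrightarrow> ndeg Sx k \<le> 1)"
    using nuc_prop[of m] m cm unfolding cmp_def by auto
qed

lemma ii_iii: assumes P: "propP adj a p Sx"
  shows "\<exists>S N. subgraph adj S \<and> propP adj a p S \<and> is_nuclei S N \<and> x \<in> GammaG adj a p h1 S N"
proof -
  define N where "N = range nuc"
  have nucN: "is_nuclei Sx N" unfolding N_def by (rule is_nuc)
  have P2S: "P2 Sx" using P unfolding propP_def P2_def by blast
  have symS: "\<And>i j. Sx i j \<Longrightarrow> Sx j i" by (rule Sx_sym)
  have irrS: "\<And>i. \<not> Sx i i" by (rule Sx_irr)
  have xvn: "xv n * H = ap_nuc a p Sx n" if n: "n \<in> N" for n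
  proof (cases "\<exists>k. Sx n k")
    case True
    define k0 where "k0 = (SOME k. Sx n k)"
    have k0: "Sx n k0" unfolding k0_def using someI_ex[OF True] .
    have "(n = n \<and> ndeg Sx k0 \<le> 1) \<or> (n = k0 \<and> ndeg Sx n \<le> 1)"
      by (rule nuc_in_edge[OF symS irrS P2S nucN k0 n rtranclp.rtrancl_refl])
    hence "ndeg Sx k0 \<le> 1" using k0 irrS by auto
    hence leaf: "{m. Sx k0 m} = {n}" using leaf_eq[of Sx k0 n] symS[OF k0] by simp
    have "ap n k0 = H * xv n" using leaf_edge_ap[OF _ leaf] k0 Sx_iff by simp
    thus ?thesis unfolding ap_nuc_def using True k0_def by simp
  next
    case False
    hence "x n j = 0" for j using x_nn[of n j] Sx_iff by (metis less_eq_real_def)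
    hence "xv n = 0" unfolding xv_def' by simp
    moreover have "ap_nuc a p Sx n = 0" unfolding ap_nuc_def by (subst if_not_P[OF False]) simp
    ultimately show ?thesis by simp
  qed
  have out_in: "j \<in> N" if "x i j > 0" "i \<notin> N" for i j
  proof -
    obtain n where n: "n \<in> N" "Sx\<^sup>*\<^sup>* i n" using nucN unfolding is_nuclei_def by blast
    have "Sx i j" using that Sx_iff by simp
    from nuc_in_edge[OF symS irrS P2S nucN this n] show ?thesis using n that by auto
  qed
  have in_out: "i \<notin> N" if "x j i > 0" "j \<in> N" for i j
  proof
    assume iN: "i \<in> N"
    have "Sx j i" using that Sx_iff by simp
    hence "Sx\<^sup>*\<^sup>* j i" by (rule r_into_rtranclp)
    hence "j = i" by (rule nuc_unique[OF nucN that(2) rtranclp.rtrancl_refl iN])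
    hence "i = j" by simp
    thus False using that x_irr by simp
  qed
  have half: "(\<Sum>n\<in>N. xv n) = 1 / 2"
  proof -
    have r1: "(\<Sum>j\<in>UNIV. x i j) = (\<Sum>j\<in>N. x i j)" if i: "i \<notin> N" for i
    proof (rule sum.mono_neutral_right)
      show "\<forall>j\<in>UNIV - N. x i j = 0"
        using out_in i x_nn by (metis DiffD2 less_eq_real_def)
    qed auto
    have r2: "(\<Sum>i\<in>-N. x j i) = (\<Sum>i\<in>UNIV. x j i)" if j: "j \<in> N" for j
    proof (rule sum.mono_neutral_left)
      show "\<forall>i\<in>UNIV - - N. x j i = 0"
        using in_out j x_nn by (metis Diff_iff Compl_iff less_eq_real_def)
    qed auto
    have "(\<Sum>i\<in>-N. xv i) = (\<Sum>i\<in>-N. \<Sum>j\<in>N. x i j)"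
      unfolding xv_def' by (rule sum.cong[OF refl]) (use r1 in auto)
    also have "\<dots> = (\<Sum>j\<in>N. \<Sum>i\<in>-N. x j i)"
      by (subst sum.swap) (simp add: x_sym)
    also have "\<dots> = (\<Sum>j\<in>N. xv j)"
      unfolding xv_def' by (rule sum.cong[OF refl]) (use r2 in auto)
    finally have A': "(\<Sum>i\<in>-N. xv i) = (\<Sum>j\<in>N. xv j)" .
    have "(\<Sum>i\<in>UNIV. xv i) = (\<Sum>i\<in>UNIV - N. xv i) + (\<Sum>i\<in>N. xv i)"
      by (rule sum.subset_diff) auto
    hence "1 = 2 * (\<Sum>i\<in>N. xv i)" using xv_total A' by (simp add: Compl_eq_Diff_UNIV)
    thus ?thesis by simp
  qed
  have Sg: "(\<Sum>n\<in>N. ap_nuc a p Sx n) = H / 2"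
  proof -
    have "(\<Sum>n\<in>N. ap_nuc a p Sx n) = (\<Sum>n\<in>N. xv n) * H"
      using xvn by (simp add: sum_distrib_right)
    thus ?thesis using half by simp
  qed
  have G: "x \<in> GammaG adj a p h1 Sx N"
    unfolding GammaG_def
  proof (intro CollectI conjI ballI allI impI xD refl)
    fix i assume i: "i \<in> N"
    show "vsum x i = ap_nuc a p Sx i / (2 * (\<Sum>j\<in>N. ap_nuc a p Sx j))"
      unfolding Sg using xvn[OF i] H_pos by (simp add: field_simps)
  next
    fix i j assume "Sx i j" thus "x i j > 0" using Sx_iff by simp
  next
    fix i
    show "(\<Sum>j\<in>{j. Sx i j}. x i j) = vsum x i"
      unfolding xv_def' Sx_iff
      by (rule sum.mono_neutral_left) (auto simp: order.strict_iff_not x_nn antisym)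
  qed
  have sub: "subgraph adj Sx" unfolding subgraph_def using Sx_sym Sx_iff x_pos_adj by blast
  show ?thesis using sub P nucN G by blast
qed

end


theorem proposition1:
  fixes adj :: "'v::finite \<Rightarrow> 'v \<Rightarrow> bool"
    and a p x :: "'v \<Rightarrow> 'v \<Rightarrow> real" and h1 :: real
  assumes adj_sym: "\<And>i j. adj i j \<Longrightarrow> adj j i"
    and adj_irrefl: "\<And>i. \<not> adj i i"
    and a_sym: "\<And>i j. a i j = a j i" and a_nonneg: "\<And>i j. a i j \<ge> 0"
    and a_adj: "\<And>i j. a i j > 0 \<Longrightarrow> adj i j"
    and p_sym: "\<And>i j. p i j = p j i" and p_range: "\<And>i j. 0 \<le> p i j \<and> p i j \<le> 1"
    and p_adj: "\<And>i j. \<not> adj i j \<Longrightarrow> p i j = 0"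
    and ap_pos: "\<exists>i j. a i j * p i j > 0"
    and h1: "0 < h1" "h1 \<le> 1"
    and x: "x \<in> Delta adj a p h1 - bdry adj a p h1"
  shows "(stable_eq adj a p h1 x \<longleftrightarrow>
            x \<in> Gamma adj a p h1 \<and> propP adj a p (graph_of x))
       \<and> (x \<in> Gamma adj a p h1 \<and> propP adj a p (graph_of x) \<longleftrightarrow>
            (\<exists>S N. subgraph adj S \<and> propP adj a p S \<and> is_nuclei S N \<and>
                   x \<in> GammaG adj a p h1 S N))"
proof -
  have psi: "PS adj a p x h1"
    by (unfold_locales) (use adj_sym adj_irrefl a_sym a_nonneg a_adj p_sym p_range p_adj h1 x in auto)
  interpret PS adj a p x h1 by (rule psi)
  have psg: "PSG adj a p x h1" if G: "x \<in> Gamma adj a p h1"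
    by (rule PSG.intro[OF psi]) (rule PSG_axioms.intro[OF G])
  have one: "stable_eq adj a p h1 x \<longleftrightarrow> x \<in> Gamma adj a p h1 \<and> propP adj a p (graph_of x)"
  proof
    assume st: "stable_eq adj a p h1 x"
    hence G: "x \<in> Gamma adj a p h1" by (simp add: stable_eq_def)
    interpret PSG adj a p x h1 by (rule psg[OF G])
    have "P2 Sx" by (rule unstable_part) (use st in \<open>auto simp: stable_eq_def\<close>)
    thus "x \<in> Gamma adj a p h1 \<and> propP adj a p (graph_of x)" using G propP_of_P2 by blast
  next
    assume h: "x \<in> Gamma adj a p h1 \<and> propP adj a p (graph_of x)"
    interpret PSG adj a p x h1 by (rule psg) (use h in blast)
    have P: "P2 Sx" using h unfolding propP_def P2_def by blast
    show "stable_eq adj a p h1 x"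
      unfolding stable_eq_def using h xnb stable_part[OF P] by blast
  qed
  have two: "x \<in> Gamma adj a p h1 \<and> propP adj a p (graph_of x) \<longleftrightarrow>
            (\<exists>S N. subgraph adj S \<and> propP adj a p S \<and> is_nuclei S N \<and> x \<in> GammaG adj a p h1 S N)"
  proof
    assume h: "x \<in> Gamma adj a p h1 \<and> propP adj a p (graph_of x)"
    interpret PSG adj a p x h1 by (rule psg) (use h in blast)
    show "\<exists>S N. subgraph adj S \<and> propP adj a p S \<and> is_nuclei S N \<and> x \<in> GammaG adj a p h1 S N"
      by (rule ii_iii) (use h in blast)
  next
    assume "\<exists>S N. subgraph adj S \<and> propP adj a p S \<and> is_nuclei S N \<and> x \<in> GammaG adj a p h1 S N"
    then obtain S N where h: "subgraph adj S" "propP adj a p S" "is_nuclei S N" "x \<in> GammaG adj a p h1 S N" by blast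
    have "x \<in> Gamma adj a p h1" by (rule iii_ii[OF h])
    moreover have "graph_of x = S" using h(4) unfolding GammaG_def by blast
    ultimately show "x \<in> Gamma adj a p h1 \<and> propP adj a p (graph_of x)" using h(2) by simp
  qed
  show ?thesis using one two by blast
qed


end
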